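(* Let $0<\epsilon,\delta,\lambda<1$, $F=1-\epsilon$, $\nu=1-\lambda$, $k_+=\lceil\log_\lambda\delta\rceil$, $k_-=\lfloor\log_\lambda\delta\rfloor$. Then $$k_-+\Big\lceil\frac{k_-F}{\lambda\epsilon}\Big\rceil\le N(\epsilon,\delta,\lambda)\le k_++\Big\lceil\frac{k_+F}{\lambda\epsilon}\Big\rceil,$$ $$N(\epsilon,\delta,\lambda)\le\Big\lceil\frac{\log_\lambda\delta}{\lambda\epsilon}-\frac{\nu k_-}{\lambda}\Big\rceil=\Big\lceil\frac{\ln\delta}{\lambda\epsilon\ln\lambda}-\frac{\nu k_-}{\lambda}\Big\rceil.$$ All three bounds are saturated when $\log_\lambda\delta$ is an integer.
   Context: Let $\mathcal H$ be a Hilbert space of finite dimension $D\ge 2$ and $|\Psi\rangle\in\mathcal H$ a unit vector. For $0\le\lambda<1$ let $\Omega_\lambda=|\Psi\rangle\langle\Psi|+\lambda(1-|\Psi\rangle\langle\Psi|)$. For an integer $N\ge1$ and a density operator $\rho$ on $\mathcal H^{\otimes(N+1)}$ put $p_\rho=\mathrm{tr}[(\Omega_\lambda^{\otimes N}\otimes 1)\rho]$ and $f_\rho=\mathrm{tr}[(\Omega_\lambda^{\otimes N}\otimes|\Psi\rangle\langle\Psi|)\rho]$. Define $F(N,\delta,\lambda)=\min\{f_\rho/p_\rho: p_\rho\ge\delta\}$ for $0<\delta\le1$, the minimum over permutation-invariant density operators on $\mathcal H^{\otimes(N+1)}$, and for $0<\epsilon,\delta<1$ let $N(\epsilon,\delta,\lambda)=\min\{N\ge1: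 F(N,\delta,\lambda)\ge1-\epsilon\}$. *)

theory Defs
  imports "HOL-Analysis.Analysis" "HOL-Combinatorics.Permutations"
begin

text \<open>The Hilbert space H = C^D with computational basis {0..<D}.
  H^{\<otimes> m} has orthonormal basis indexed by lists xs of length m with entries < D.
  Operators on H^{\<otimes> m} are given by their matrix entries A xs ys in this basis.\<close>

type_synonym op = "nat list \<Rightarrow> nat list \<Rightarrow> complex"

definition basis :: "nat \<Rightarrow> nat \<Rightarrow> nat list set" where
  "basis D m = {xs. length xs = m \<and> set xs \<subseteq> {..<D}}"

definition unit_vec :: "nat \<Rightarrow> (nat \<Rightarrow> complex) \<Rightarrow> bool" where
  "unit_vec D psi \<longleftrightarrow> (\<Sum>i<D. (cmod (psi i))\<^sup>2) = 1"

definition proj :: "(nat \<Rightarrow> complex) \<Rightarrow> nat \<Rightarrow> nat \<Rightarrow> complex" where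
  "proj psi i j = psi i * cnj (psi j)"

definition Omega :: "(nat \<Rightarrow> complex) \<Rightarrow> real \<Rightarrow> nat \<Rightarrow> nat \<Rightarrow> complex" where
  "Omega psi lam i j = proj psi i j + of_real lam * ((if i = j then 1 else 0) - proj psi i j)"

definition id_op :: "nat \<Rightarrow> nat \<Rightarrow> complex" where
  "id_op i j = (if i = j then 1 else 0)"

definition tensor_pow_with :: "(nat \<Rightarrow> nat \<Rightarrow> complex) \<Rightarrow> nat \<Rightarrow> (nat \<Rightarrow> nat \<Rightarrow> complex) \<Rightarrow> op" where
  "tensor_pow_with A N B xs ys = (\<Prod>k<N. A (xs ! k) (ys ! k)) * B (xs ! N) (ys ! N)"

definition trace_prod :: "nat \<Rightarrow> nat \<Rightarrow> op \<Rightarrow> op \<Rightarrow> complex" where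
  "trace_prod D m A rho = (\<Sum>xs\<in>basis D m. \<Sum>ys\<in>basis D m. A xs ys * rho ys xs)"

definition density_op :: "nat \<Rightarrow> nat \<Rightarrow> op \<Rightarrow> bool" where
  "density_op D m rho \<longleftrightarrow>
     (\<forall>v :: nat list \<Rightarrow> complex.
        let q = (\<Sum>xs\<in>basis D m. \<Sum>ys\<in>basis D m. cnj (v xs) * rho xs ys * v ys)
        in Im q = 0 \<and> Re q \<ge> 0)
   \<and> (\<Sum>xs\<in>basis D m. rho xs xs) = 1"

definition perm_list :: "(nat \<Rightarrow> nat) \<Rightarrow> nat list \<Rightarrow> nat list" where
  "perm_list p xs = map (\<lambda>i. xs ! p i) [0..<length xs]"

definition perm_inv :: "nat \<Rightarrow> nat \<Rightarrow> op \<Rightarrow> bool" where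
  "perm_inv D m rho \<longleftrightarrow>
     (\<forall>p. p permutes {..<m} \<longrightarrow>
        (\<forall>xs\<in>basis D m. \<forall>ys\<in>basis D m. rho (perm_list p xs) (perm_list p ys) = rho xs ys))"

definition p_rho :: "nat \<Rightarrow> (nat \<Rightarrow> complex) \<Rightarrow> real \<Rightarrow> nat \<Rightarrow> op \<Rightarrow> real" where
  "p_rho D psi lam N rho = Re (trace_prod D (N+1) (tensor_pow_with (Omega psi lam) N id_op) rho)"

definition f_rho :: "nat \<Rightarrow> (nat \<Rightarrow> complex) \<Rightarrow> real \<Rightarrow> nat \<Rightarrow> op \<Rightarrow> real" where
  "f_rho D psi lam N rho = Re (trace_prod D (N+1) (tensor_pow_with (Omega psi lam) N (proj psi)) rho)"

text \<open>F(N,delta,lambda): the minimum (written as infimum; it is attained) of f/p.\<close>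
definition Fid :: "nat \<Rightarrow> (nat \<Rightarrow> complex) \<Rightarrow> nat \<Rightarrow> real \<Rightarrow> real \<Rightarrow> real" where
  "Fid D psi N delta lam = Inf {f_rho D psi lam N rho / p_rho D psi lam N rho | rho.
      density_op D (N+1) rho \<and> perm_inv D (N+1) rho \<and> p_rho D psi lam N rho \<ge> delta}"

definition Nmin :: "nat \<Rightarrow> (nat \<Rightarrow> complex) \<Rightarrow> real \<Rightarrow> real \<Rightarrow> real \<Rightarrow> nat" where
  "Nmin D psi eps delta lam = (LEAST N. N \<ge> 1 \<and> Fid D psi N delta lam \<ge> 1 - eps)"

end

theory Submission
  imports Defs
begin


definition tens :: "nat \<Rightarrow> (nat \<Rightarrow> nat \<Rightarrow> nat \<Rightarrow> complex) \<Rightarrow> op" where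
  "tens m As xs ys = (\<Prod>i<m. As i (xs!i) (ys!i))"

lemma basis_0: "basis D 0 = {[]}"
  by (auto simp: basis_def)

lemma basis_Suc: "basis D (Suc m) = (\<lambda>(xs,x). xs@[x]) ` (basis D m \<times> {..<D})"
proof (rule set_eqI, rule iffI)
  fix ys assume "ys \<in> basis D (Suc m)"
  then have l: "length ys = Suc m" and s: "set ys \<subseteq> {..<D}" by (auto simp: basis_def)
  then obtain xs x where "ys = xs @ [x]"
    by (metis length_Suc_conv_rev)
  with l s show "ys \<in> (\<lambda>(xs,x). xs@[x]) ` (basis D m \<times> {..<D})"
    by (auto simp: basis_def image_iff)
qed (auto simp: basis_def)

lemma inj_snoc: "inj_on (\<lambda>(xs,x). xs@[x]) A"
  by (auto simp: inj_on_def)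

lemma finite_basis[simp]: "finite (basis D m)"
  by (induction m) (auto simp: basis_0 basis_Suc)

lemma sum_basis_Suc:
  "(\<Sum>xs\<in>basis D (Suc m). g xs) = (\<Sum>xs\<in>basis D m. \<Sum>x<D. g (xs@[x]))"
  unfolding basis_Suc
  by (subst sum.reindex[OF inj_snoc]) (simp add: sum.cartesian_product split_def)

lemma prodsum1:
  fixes h :: "nat \<Rightarrow> nat \<Rightarrow> 'a::comm_semiring_1"
  shows "(\<Sum>xs\<in>basis D m. \<Prod>i<m. h i (xs!i)) = (\<Prod>i<m. \<Sum>x<D. h i x)"
proof (induction m)
  case 0 then show ?case by (simp add: basis_0)
next
  case (Suc m)
  have "(\<Sum>xs\<in>basis D (Suc m). \<Prod>i<Suc m. h i (xs!i))
      = (\<Sum>xs\<in>basis D m. \<Sum>x<D. \<Prod>i<Suc m. h i ((xs@[x])!i))" by (rule sum_basis_Suc)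
  also have "\<dots> = (\<Sum>xs\<in>basis D m. \<Sum>x<D. (\<Prod>i<m. h i (xs!i)) * h m x)"
  proof (rule sum.cong[OF refl], rule sum.cong[OF refl])
    fix xs x assume "xs \<in> basis D m"
    then have l: "length xs = m" by (simp add: basis_def)
    have "(\<Prod>i<Suc m. h i ((xs@[x])!i)) = (\<Prod>i<m. h i ((xs@[x])!i)) * h m x"
      using l by (simp add: nth_append)
    also have "(\<Prod>i<m. h i ((xs@[x])!i)) = (\<Prod>i<m. h i (xs!i))"
      using l by (intro prod.cong) (auto simp: nth_append)
    finally show "(\<Prod>i<Suc m. h i ((xs@[x])!i)) = (\<Prod>i<m. h i (xs!i)) * h m x" .
  qed
  also have "\<dots> = (\<Sum>xs\<in>basis D m. \<Prod>i<m. h i (xs!i)) * (\<Sum>x<D. h m x)"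
    by (simp add: sum_distrib_left sum_distrib_right sum.swap[of _ "basis D m"])
  finally show ?case using Suc by simp
qed

lemma prodsum2:
  fixes h :: "nat \<Rightarrow> nat \<Rightarrow> nat \<Rightarrow> 'a::comm_semiring_1"
  shows "(\<Sum>xs\<in>basis D m. \<Sum>ys\<in>basis D m. \<Prod>i<m. h i (xs!i) (ys!i))
       = (\<Prod>i<m. \<Sum>x<D. \<Sum>y<D. h i x y)"
proof -
  have "(\<Sum>xs\<in>basis D m. \<Sum>ys\<in>basis D m. \<Prod>i<m. h i (xs!i) (ys!i))
      = (\<Sum>xs\<in>basis D m. \<Prod>i<m. \<Sum>y<D. h i (xs!i) y)"
    by (intro sum.cong refl prodsum1)
  also have "\<dots> = (\<Prod>i<m. \<Sum>x<D. \<Sum>y<D. h i x y)"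
    by (rule prodsum1[where h="\<lambda>i x. \<Sum>y<D. h i x y"])
  finally show ?thesis .
qed

definition tr1 :: "nat \<Rightarrow> (nat \<Rightarrow> nat \<Rightarrow> complex) \<Rightarrow> (nat \<Rightarrow> nat \<Rightarrow> complex) \<Rightarrow> complex" where
  "tr1 D A B = (\<Sum>x<D. \<Sum>y<D. A x y * B y x)"

lemma trace_tens:
  "trace_prod D m (tens m As) (tens m Bs) = (\<Prod>i<m. tr1 D (As i) (Bs i))"
  unfolding trace_prod_def tens_def tr1_def
  by (simp add: prod.distrib[symmetric] prodsum2[where h="\<lambda>i x y. As i x y * Bs i y x"])

lemma diag_tens:
  "(\<Sum>xs\<in>basis D m. tens m As xs xs) = (\<Prod>i<m. \<Sum>x<D. As i x x)"
  unfolding tens_def by (rule prodsum1[where h="\<lambda>i x. As i x x"])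

definition gram :: "nat \<Rightarrow> (nat \<Rightarrow> nat \<Rightarrow> complex) \<Rightarrow> (nat \<Rightarrow> nat \<Rightarrow> complex) \<Rightarrow> bool" where
  "gram D u A \<longleftrightarrow> (\<forall>x<D. \<forall>y<D. A x y = (\<Sum>j<D. u j x * cnj (u j y)))"

definition W :: "nat \<Rightarrow> (nat \<Rightarrow> nat \<Rightarrow> nat \<Rightarrow> complex) \<Rightarrow> nat list \<Rightarrow> nat list \<Rightarrow> complex" where
  "W m u js xs = (\<Prod>i<m. u i (js!i) (xs!i))"

lemma basis_nth: "xs \<in> basis D m \<Longrightarrow> i < m \<Longrightarrow> xs ! i < D"
  unfolding basis_def using nth_mem by fastforce

lemma tens_gram:
  assumes g: "\<And>i. i < m \<Longrightarrow> gram D (u i) (As i)"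
    and xs: "xs \<in> basis D m" and ys: "ys \<in> basis D m"
  shows "tens m As xs ys = (\<Sum>js\<in>basis D m. W m u js xs * cnj (W m u js ys))"
proof -
  have "tens m As xs ys = (\<Prod>i<m. \<Sum>j<D. u i j (xs!i) * cnj (u i j (ys!i)))"
    unfolding tens_def using g xs ys basis_nth[OF xs] basis_nth[OF ys]
    by (intro prod.cong refl) (auto simp: gram_def)
  also have "\<dots> = (\<Sum>js\<in>basis D m. \<Prod>i<m. u i (js!i) (xs!i) * cnj (u i (js!i) (ys!i)))"
    by (rule prodsum1[symmetric])
  also have "\<dots> = (\<Sum>js\<in>basis D m. W m u js xs * cnj (W m u js ys))"
    unfolding W_def by (simp add: prod.distrib)
  finally show ?thesis .
qed

definition psd :: "nat \<Rightarrow> nat \<Rightarrow> op \<Rightarrow> bool" where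
  "psd D m rho \<longleftrightarrow> (\<forall>v :: nat list \<Rightarrow> complex.
        let q = (\<Sum>xs\<in>basis D m. \<Sum>ys\<in>basis D m. cnj (v xs) * rho xs ys * v ys)
        in Im q = 0 \<and> Re q \<ge> 0)"

lemma trace_tens_nonneg:
  assumes g: "\<And>i. i < m \<Longrightarrow> gram D (u i) (As i)" and rho: "density_op D m rho"
  shows "Re (trace_prod D m (tens m As) rho) \<ge> 0"
proof -
  have "trace_prod D m (tens m As) rho =
      (\<Sum>xs\<in>basis D m. \<Sum>ys\<in>basis D m. \<Sum>js\<in>basis D m. W m u js xs * cnj (W m u js ys) * rho ys xs)"
    unfolding trace_prod_def using tens_gram[OF g]
    by (intro sum.cong refl) (simp add: sum_distrib_right)
  also have "\<dots> = (\<Sum>xs\<in>basis D m. \<Sum>js\<in>basis D m. \<Sum>ys\<in>basis D m. W m u js xs * cnj (W m u js ys) * rho ys xs)"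
    by (rule sum.cong[OF refl], rule sum.swap)
  also have "\<dots> = (\<Sum>js\<in>basis D m. \<Sum>xs\<in>basis D m. \<Sum>ys\<in>basis D m. W m u js xs * cnj (W m u js ys) * rho ys xs)"
    by (rule sum.swap)
  also have "\<dots> = (\<Sum>js\<in>basis D m. \<Sum>ys\<in>basis D m. \<Sum>xs\<in>basis D m. W m u js xs * cnj (W m u js ys) * rho ys xs)"
    by (rule sum.cong[OF refl], rule sum.swap)
  also have "\<dots> = (\<Sum>js\<in>basis D m. \<Sum>ys\<in>basis D m. \<Sum>xs\<in>basis D m.
        cnj (W m u js ys) * rho ys xs * W m u js xs)"
    by (intro sum.cong refl) (simp add: mult_ac)
  finally have eq: "trace_prod D m (tens m As) rho = \<dots>" .
  have "\<forall>js. Re (\<Sum>ys\<in>basis D m. \<Sum>xs\<in>basis D m. cnj (W m u js ys) * rho ys xs * W m u js xs) \<ge> 0"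
    using rho unfolding density_op_def Let_def by blast
  then show ?thesis unfolding eq by (simp add: Re_sum sum_nonneg)
qed

lemma psd_tens:
  assumes g: "\<And>i. i < m \<Longrightarrow> gram D (u i) (As i)"
  shows "psd D m (tens m As)"
  unfolding psd_def Let_def
proof
  fix v :: "nat list \<Rightarrow> complex"
  define z where "z js = (\<Sum>xs\<in>basis D m. cnj (v xs) * W m u js xs)" for js
  have "(\<Sum>xs\<in>basis D m. \<Sum>ys\<in>basis D m. cnj (v xs) * tens m As xs ys * v ys)
      = (\<Sum>xs\<in>basis D m. \<Sum>ys\<in>basis D m. \<Sum>js\<in>basis D m. cnj (v xs) * W m u js xs * (cnj (W m u js ys) * v ys))"
    using tens_gram[OF g] by (intro sum.cong refl) (simp add: sum_distrib_left sum_distrib_right mult_ac)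
  also have "\<dots> = (\<Sum>xs\<in>basis D m. \<Sum>js\<in>basis D m. \<Sum>ys\<in>basis D m. cnj (v xs) * W m u js xs * (cnj (W m u js ys) * v ys))"
    by (rule sum.cong[OF refl], rule sum.swap)
  also have "\<dots> = (\<Sum>js\<in>basis D m. \<Sum>xs\<in>basis D m. \<Sum>ys\<in>basis D m. cnj (v xs) * W m u js xs * (cnj (W m u js ys) * v ys))"
    by (rule sum.swap)
  also have "\<dots> = (\<Sum>js\<in>basis D m. z js * cnj (z js))"
    unfolding z_def cnj_sum sum_product by (simp add: mult_ac)
  also have "\<dots> = of_real (\<Sum>js\<in>basis D m. (Re (z js))\<^sup>2 + (Im (z js))\<^sup>2)"
    by (simp add: complex_mult_cnj)
  finally have eq: "(\<Sum>xs\<in>basis D m. \<Sum>ys\<in>basis D m. cnj (v xs) * tens m As xs ys * v ys) = \<dots>" .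
  show "Im (\<Sum>xs\<in>basis D m. \<Sum>ys\<in>basis D m. cnj (v xs) * tens m As xs ys * v ys) = 0 \<and>
        0 \<le> Re (\<Sum>xs\<in>basis D m. \<Sum>ys\<in>basis D m. cnj (v xs) * tens m As xs ys * v ys)"
    unfolding eq by (simp add: sum_nonneg)
qed

lemma length_pl[simp]: "length (perm_list p xs) = length xs"
  by (simp add: perm_list_def)

lemma nth_pl[simp]: "i < length xs \<Longrightarrow> perm_list p xs ! i = xs ! p i"
  by (simp add: perm_list_def)

lemma pl_basis:
  assumes p: "p permutes {..<m}" and xs: "xs \<in> basis D m"
  shows "perm_list p xs \<in> basis D m"
proof -
  have l: "length xs = m" using xs by (simp add: basis_def)
  have "set (perm_list p xs) \<subseteq> {..<D}"
  proof
    fix y assume "y \<in> set (perm_list p xs)"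
    then obtain i where i: "i < m" "y = xs ! p i" using l by (auto simp: in_set_conv_nth)
    have "p i < m" using p i(1) by (metis lessThan_iff permutes_in_image)
    then show "y \<in> {..<D}" using basis_nth[OF xs] i by auto
  qed
  then show ?thesis using l by (simp add: basis_def)
qed

lemma pl_inv:
  assumes p: "p permutes {..<m}" and l: "length xs = m"
  shows "perm_list p (perm_list (inv p) xs) = xs"
proof (rule nth_equalityI)
  show "length (perm_list p (perm_list (inv p) xs)) = length xs" by simp
  fix i assume "i < length (perm_list p (perm_list (inv p) xs))"
  then have i: "i < m" using l by simp
  have "p i < m" using p i by (metis lessThan_iff permutes_in_image)
  then show "perm_list p (perm_list (inv p) xs) ! i = xs ! i"
    using i l by (simp add: permutes_inverses[OF p])
qed

lemma pl_bij:
  assumes p: "p permutes {..<m}"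
  shows "bij_betw (perm_list p) (basis D m) (basis D m)"
proof (rule bij_betw_byWitness[where f'="perm_list (inv p)"])
  have ip: "inv p permutes {..<m}" using p by (rule permutes_inv)
  show "\<forall>a\<in>basis D m. perm_list (inv p) (perm_list p a) = a"
    using pl_inv[OF ip] permutes_inv_inv[OF p] by (auto simp: basis_def)
  show "\<forall>a\<in>basis D m. perm_list p (perm_list (inv p) a) = a"
    using pl_inv[OF p] by (auto simp: basis_def)
  show "perm_list p ` basis D m \<subseteq> basis D m" using pl_basis[OF p] by auto
  show "perm_list (inv p) ` basis D m \<subseteq> basis D m" using pl_basis[OF ip] by auto
qed

lemma tens_pl:
  assumes p: "p permutes {..<m}" and "length xs = m" "length ys = m"
  shows "tens m As (perm_list p xs) (perm_list p ys) = tens m (\<lambda>j. As (inv p j)) xs ys"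
proof -
  have "tens m As (perm_list p xs) (perm_list p ys) = (\<Prod>i<m. As (inv p (p i)) (xs ! p i) (ys ! p i))"
    unfolding tens_def using assms by (simp add: permutes_inverses[OF p])
  also have "\<dots> = (\<Prod>j<m. As (inv p j) (xs ! j) (ys ! j))"
    by (rule prod.reindex_bij_betw[where h=p and g="\<lambda>j. As (inv p j) (xs ! j) (ys ! j)"])
       (rule permutes_imp_bij[OF p])
  finally show ?thesis unfolding tens_def .
qed

lemma trace_perm:
  assumes rho: "perm_inv D m rho" and s: "s permutes {..<m}"
  shows "trace_prod D m (tens m As) rho = trace_prod D m (tens m (\<lambda>j. As (s j))) rho"
proof -
  define p where "p = inv s"
  have p: "p permutes {..<m}" unfolding p_def using s by (rule permutes_inv)
  have ip: "inv p = s" unfolding p_def by (rule permutes_inv_inv[OF s])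
  have "trace_prod D m (tens m As) rho
      = (\<Sum>xs\<in>basis D m. \<Sum>ys\<in>basis D m. tens m As (perm_list p xs) (perm_list p ys)
              * rho (perm_list p ys) (perm_list p xs))"
    unfolding trace_prod_def
    by (subst sum.reindex_bij_betw[OF pl_bij[OF p], symmetric], rule sum.cong[OF refl],
        subst sum.reindex_bij_betw[OF pl_bij[OF p], symmetric], rule refl)
  also have "\<dots> = (\<Sum>xs\<in>basis D m. \<Sum>ys\<in>basis D m. tens m (\<lambda>j. As (s j)) xs ys * rho ys xs)"
    using rho p unfolding perm_inv_def
    by (intro sum.cong refl) (simp add: tens_pl[OF p] basis_def ip)
  finally show ?thesis unfolding trace_prod_def .
qed

definition Bop :: "(nat \<Rightarrow> complex) \<Rightarrow> nat \<Rightarrow> nat \<Rightarrow> complex" where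
  "Bop psi x y = id_op x y - proj psi x y"

definition TS :: "(nat \<Rightarrow> complex) \<Rightarrow> nat set \<Rightarrow> nat \<Rightarrow> nat \<Rightarrow> nat \<Rightarrow> complex" where
  "TS psi S i = (if i \<in> S then Bop psi else proj psi)"

lemma unit_sum:
  assumes "unit_vec D psi"
  shows "(\<Sum>j<D. psi j * cnj (psi j)) = 1"
proof -
  have "(\<Sum>j<D. psi j * cnj (psi j)) = (\<Sum>j<D. complex_of_real ((cmod (psi j))\<^sup>2))"
    by (intro sum.cong refl) (rule complex_norm_square[symmetric])
  also have "\<dots> = complex_of_real (\<Sum>j<D. (cmod (psi j))\<^sup>2)"
    by (simp only: of_real_sum)
  also have "\<dots> = 1" using assms by (simp only: unit_vec_def) simp
  finally show ?thesis .
qed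

lemma id_sum: "x < D \<Longrightarrow> (\<Sum>j<D. id_op x j * f j) = f x"
proof -
  assume x: "x < D"
  have "(\<Sum>j<D. id_op x j * f j) = (\<Sum>j<D. if x = j then f j else 0)"
    by (intro sum.cong refl) (simp add: id_op_def)
  also have "\<dots> = f x" using x by simp
  finally show ?thesis .
qed

lemma id_sum2: "x < D \<Longrightarrow> (\<Sum>j<D. f j * id_op x j) = f x"
  using id_sum[of x D f] by (simp add: mult.commute)

lemma gram_P:
  assumes "D \<ge> 1"
  shows "gram D (\<lambda>j x. if j = 0 then psi x else 0) (proj psi)"
proof -
  have "(\<Sum>j<D. (if j = 0 then psi x else 0) * cnj (if j = 0 then psi y else 0)) = psi x * cnj (psi y)" for x y
  proof -
    have "(\<Sum>j<D. (if j = 0 then psi x else 0) * cnj (if j = 0 then psi y else 0))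
        = (\<Sum>j<D. if j = 0 then psi x * cnj (psi y) else 0)"
      by (intro sum.cong refl) auto
    also have "\<dots> = psi x * cnj (psi y)" using assms by (subst sum.delta) auto
    finally show ?thesis .
  qed
  then show ?thesis by (simp add: gram_def proj_def)
qed

lemma gram_B:
  assumes u: "unit_vec D psi"
  shows "gram D (\<lambda>j x. id_op x j - psi x * cnj (psi j)) (Bop psi)"
  unfolding gram_def
proof (intro allI impI)
  fix x y assume x: "x < D" and y: "y < D"
  have cid: "cnj (id_op y j) = id_op y j" for j by (simp add: id_op_def)
  have "(\<Sum>j<D. (id_op x j - psi x * cnj (psi j)) * cnj (id_op y j - psi y * cnj (psi j)))
     = (\<Sum>j<D. id_op x j * id_op y j - id_op x j * (cnj (psi y) * psi j)
          - psi x * cnj (psi j) * id_op y j + psi x * cnj (psi y) * (psi j * cnj (psi j)))"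
    by (intro sum.cong refl) (simp add: cid algebra_simps)
  also have "\<dots> = (\<Sum>j<D. id_op x j * id_op y j) - (\<Sum>j<D. id_op x j * (cnj (psi y) * psi j))
       - (\<Sum>j<D. psi x * cnj (psi j) * id_op y j) + psi x * cnj (psi y) * (\<Sum>j<D. psi j * cnj (psi j))"
    by (simp add: sum.distrib sum_subtractf sum_distrib_left)
  also have "\<dots> = id_op y x - cnj (psi y) * psi x - psi x * cnj (psi y) + psi x * cnj (psi y)"
    using x y unit_sum[OF u] by (simp add: id_sum id_sum2)
  also have "\<dots> = Bop psi x y" by (simp add: Bop_def proj_def id_op_def)
  finally show "Bop psi x y = (\<Sum>j<D. (id_op x j - psi x * cnj (psi j)) * cnj (id_op y j - psi y * cnj (psi j)))" by simp
qed

lemma tau_nonneg: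
  assumes "D \<ge> 1" "unit_vec D psi" "density_op D m rho"
  shows "Re (trace_prod D m (tens m (TS psi S)) rho) \<ge> 0"
proof (rule trace_tens_nonneg[where u="\<lambda>i. if i \<in> S then (\<lambda>j x. id_op x j - psi x * cnj (psi j))
      else (\<lambda>j x. if j = 0 then psi x else 0)"])
  show "gram D (if i \<in> S then (\<lambda>j x. id_op x j - psi x * cnj (psi j)) else (\<lambda>j x. if j = 0 then psi x else 0)) (TS psi S i)" for i
    using gram_P[OF assms(1)] gram_B[OF assms(2)] by (simp add: TS_def)
qed (rule assms(3))

lemma psd_TS:
  assumes "D \<ge> 1" "unit_vec D psi"
  shows "psd D m (tens m (TS psi S))"
proof (rule psd_tens[where u="\<lambda>i. if i \<in> S then (\<lambda>j x. id_op x j - psi x * cnj (psi j))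
      else (\<lambda>j x. if j = 0 then psi x else 0)"])
  show "gram D (if i \<in> S then (\<lambda>j x. id_op x j - psi x * cnj (psi j)) else (\<lambda>j x. if j = 0 then psi x else 0)) (TS psi S i)" for i
    using gram_P[OF assms(1)] gram_B[OF assms(2)] by (simp add: TS_def)
qed

lemma expand_tens:
  fixes a b :: "nat \<Rightarrow> real"
  shows "tens m (\<lambda>i x y. of_real (a i) * proj psi x y + of_real (b i) * Bop psi x y) xs ys
    = (\<Sum>S\<in>Pow {..<m}. of_real ((\<Prod>i\<in>S. b i) * (\<Prod>i\<in>{..<m}-S. a i)) * tens m (TS psi S) xs ys)"
proof -
  have "tens m (\<lambda>i x y. of_real (a i) * proj psi x y + of_real (b i) * Bop psi x y) xs ys
      = (\<Prod>i<m. of_real (b i) * Bop psi (xs!i) (ys!i) + of_real (a i) * proj psi (xs!i) (ys!i))"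
    unfolding tens_def by (simp add: add.commute)
  also have "\<dots> = (\<Sum>S\<in>Pow {..<m}. (\<Prod>i\<in>S. of_real (b i) * Bop psi (xs!i) (ys!i))
         * (\<Prod>i\<in>{..<m}-S. of_real (a i) * proj psi (xs!i) (ys!i)))"
    by (rule prod_add) simp
  also have "\<dots> = (\<Sum>S\<in>Pow {..<m}. of_real ((\<Prod>i\<in>S. b i) * (\<Prod>i\<in>{..<m}-S. a i)) * tens m (TS psi S) xs ys)"
  proof (rule sum.cong[OF refl])
    fix S assume S: "S \<in> Pow {..<m}"
    have t: "tens m (TS psi S) xs ys = (\<Prod>i\<in>S. Bop psi (xs!i) (ys!i)) * (\<Prod>i\<in>{..<m}-S. proj psi (xs!i) (ys!i))"
    proof -
      have "tens m (TS psi S) xs ys = (\<Prod>i<m. if i \<in> S then Bop psi (xs!i) (ys!i) else proj psi (xs!i) (ys!i))"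
        unfolding tens_def TS_def by (intro prod.cong refl) auto
      also have "\<dots> = (\<Prod>i\<in>S. Bop psi (xs!i) (ys!i)) * (\<Prod>i\<in>{..<m}-S. proj psi (xs!i) (ys!i))"
        using S by (subst prod.If_cases) (auto simp: Int_absorb1 Diff_eq)
      finally show ?thesis .
    qed
    show "(\<Prod>i\<in>S. of_real (b i) * Bop psi (xs!i) (ys!i)) * (\<Prod>i\<in>{..<m}-S. of_real (a i) * proj psi (xs!i) (ys!i))
        = of_real ((\<Prod>i\<in>S. b i) * (\<Prod>i\<in>{..<m}-S. a i)) * tens m (TS psi S) xs ys"
      unfolding t by (simp add: prod.distrib)
  qed
  finally show ?thesis .
qed

lemma trace_sum_left:
  "trace_prod D m (\<lambda>xs ys. \<Sum>S\<in>A. c S * T S xs ys) rho = (\<Sum>S\<in>A. c S * trace_prod D m (T S) rho)"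
  unfolding trace_prod_def
  by (simp add: sum_distrib_right sum_distrib_left mult_ac sum.swap[of _ A])

lemma Re_expand:
  fixes a b :: "nat \<Rightarrow> real"
  shows "Re (trace_prod D m (tens m (\<lambda>i x y. of_real (a i) * proj psi x y + of_real (b i) * Bop psi x y)) rho)
    = (\<Sum>S\<in>Pow {..<m}. ((\<Prod>i\<in>S. b i) * (\<Prod>i\<in>{..<m}-S. a i)) * Re (trace_prod D m (tens m (TS psi S)) rho))"
proof -
  have "tens m (\<lambda>i x y. of_real (a i) * proj psi x y + of_real (b i) * Bop psi x y)
     = (\<lambda>xs ys. \<Sum>S\<in>Pow {..<m}. of_real ((\<Prod>i\<in>S. b i) * (\<Prod>i\<in>{..<m}-S. a i)) * tens m (TS psi S) xs ys)"
    by (intro ext expand_tens)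
  note eq = this
  have r: "Re (complex_of_real c * z) = c * Re z" for c z by simp
  show ?thesis unfolding eq trace_sum_left Re_sum r ..
qed

lemma tens_cong: "(\<And>i. i < m \<Longrightarrow> As i = Bs i) \<Longrightarrow> tens m As = tens m Bs"
  unfolding tens_def by (intro ext prod.cong refl) auto

lemma tpw_tens: "tensor_pow_with A N B = tens (Suc N) (\<lambda>i. if i < N then A else B)"
  unfolding tensor_pow_with_def tens_def by (intro ext) simp

definition Xop :: "(nat \<Rightarrow> complex) \<Rightarrow> real \<Rightarrow> real \<Rightarrow> nat \<Rightarrow> nat \<Rightarrow> nat \<Rightarrow> nat \<Rightarrow> complex" where
  "Xop psi lam c j i x y = of_real 1 * proj psi x y + of_real (if i = j then c else lam) * Bop psi x y"

lemma Omega_eq: "Omega psi lam = (\<lambda>x y. of_real 1 * proj psi x y + of_real lam * Bop psi x y)"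
  by (intro ext) (simp add: Omega_def Bop_def id_op_def)

lemma proj_eq: "proj psi = (\<lambda>x y. of_real 1 * proj psi x y + of_real 0 * Bop psi x y)"
  by (intro ext) simp

lemma id_eq: "id_op = (\<lambda>x y. of_real 1 * proj psi x y + of_real 1 * Bop psi x y)"
  by (intro ext) (simp add: Bop_def)

lemma tens_X_N: "tens (Suc N) (\<lambda>i. if i < N then Omega psi lam else proj psi) = tens (Suc N) (Xop psi lam 0 N)"
  by (rule tens_cong) (auto simp: Xop_def Omega_def Bop_def id_op_def fun_eq_iff)

lemma tens_Y_N: "tens (Suc N) (\<lambda>i. if i < N then Omega psi lam else id_op) = tens (Suc N) (Xop psi lam 1 N)"
  by (rule tens_cong) (auto simp: Xop_def Omega_def Bop_def id_op_def fun_eq_iff)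

lemma trace_X_j:
  assumes rho: "perm_inv D (Suc N) rho" and j: "j < Suc N"
  shows "trace_prod D (Suc N) (tens (Suc N) (Xop psi lam c N)) rho = trace_prod D (Suc N) (tens (Suc N) (Xop psi lam c j)) rho"
proof -
  have s: "Transposition.transpose j N permutes {..<Suc N}" using j by (intro permutes_swap_id) auto
  have "(\<lambda>i. Xop psi lam c N (Transposition.transpose j N i)) = Xop psi lam c j"
    by (intro ext) (auto simp: Xop_def Transposition.transpose_def)
  then show ?thesis using trace_perm[OF rho s, of "Xop psi lam c N"] by simp
qed

lemma prod_if_eq:
  fixes c d :: real
  assumes "finite S"
  shows "(\<Prod>i\<in>S. if i = j then c else d) = (if j \<in> S then c * d ^ (card S - 1) else d ^ card S)"
proof (cases "j \<in> S")
  case True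
  have "(\<Prod>i\<in>S. if i = j then c else d) = (if j = j then c else d) * (\<Prod>i\<in>S-{j}. if i = j then c else d)"
    by (rule prod.remove[OF assms True])
  also have "(\<Prod>i\<in>S-{j}. if i = j then c else d) = (\<Prod>i\<in>S-{j}. d)" by (intro prod.cong) auto
  finally show ?thesis using True assms by (simp add: card_Diff_singleton)
next
  case False
  then have "(\<Prod>i\<in>S. if i = j then c else d) = (\<Prod>i\<in>S. d)" by (intro prod.cong refl) auto
  then show ?thesis using False by simp
qed

lemma sum_if_mem:
  fixes A B :: real
  assumes "S \<subseteq> {..<m}"
  shows "(\<Sum>j<m. if j \<in> S then A else B) = real (card S) * A + real (m - card S) * B"
proof -
  have fS: "finite S" using assms finite_subset by blast
  have "(\<Sum>j<m. if j \<in> S then A else B) = (\<Sum>j\<in>{..<m} \<inter> S. A) + (\<Sum>j\<in>{..<m} \<inter> - S. B)"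
    by (subst sum.If_cases) auto
  also have "{..<m} \<inter> S = S" using assms by auto
  also have "{..<m} \<inter> - S = {..<m} - S" by auto
  finally have e: "(\<Sum>j<m. if j \<in> S then A else B) = (\<Sum>j\<in>S. A) + (\<Sum>j\<in>{..<m} - S. B)" .
  have "card ({..<m} - S) = m - card S" using assms fS by (simp add: card_Diff_subset)
  then show ?thesis using e by simp
qed

definition tau :: "nat \<Rightarrow> (nat \<Rightarrow> complex) \<Rightarrow> nat \<Rightarrow> op \<Rightarrow> nat set \<Rightarrow> real" where
  "tau D psi m rho S = Re (trace_prod D m (tens m (TS psi S)) rho)"

lemma sym_expand:
  assumes rho: "perm_inv D (Suc N) rho"
  shows "real (Suc N) * Re (trace_prod D (Suc N) (tens (Suc N) (Xop psi lam c N)) rho)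
    = (\<Sum>S\<in>Pow {..<Suc N}. (real (card S) * (c * lam ^ (card S - 1)) + real (Suc N - card S) * lam ^ card S)
          * tau D psi (Suc N) rho S)"
proof -
  let ?m = "Suc N"
  have "real ?m * Re (trace_prod D ?m (tens ?m (Xop psi lam c N)) rho)
     = (\<Sum>j<?m. Re (trace_prod D ?m (tens ?m (Xop psi lam c j)) rho))"
  proof -
    have "(\<Sum>j<?m. Re (trace_prod D ?m (tens ?m (Xop psi lam c j)) rho))
       = (\<Sum>j<?m. Re (trace_prod D ?m (tens ?m (Xop psi lam c N)) rho))"
      by (intro sum.cong refl) (simp add: trace_X_j[OF rho])
    then show ?thesis by simp
  qed
  also have "\<dots> = (\<Sum>j<?m. \<Sum>S\<in>Pow {..<?m}. (\<Prod>i\<in>S. if i = j then c else lam) * tau D psi ?m rho S)"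
  proof (rule sum.cong[OF refl])
    fix j
    have "Xop psi lam c j = (\<lambda>i x y. of_real ((\<lambda>_. 1) i) * proj psi x y + of_real ((\<lambda>i. if i = j then c else lam) i) * Bop psi x y)"
      by (intro ext) (simp add: Xop_def)
    then show "Re (trace_prod D ?m (tens ?m (Xop psi lam c j)) rho)
        = (\<Sum>S\<in>Pow {..<?m}. (\<Prod>i\<in>S. if i = j then c else lam) * tau D psi ?m rho S)"
      by (simp only: Re_expand tau_def) simp
  qed
  also have "\<dots> = (\<Sum>S\<in>Pow {..<?m}. (\<Sum>j<?m. \<Prod>i\<in>S. if i = j then c else lam) * tau D psi ?m rho S)"
    by (simp only: sum_distrib_right) (rule sum.swap)
  also have "\<dots> = (\<Sum>S\<in>Pow {..<Suc N}. (real (card S) * (c * lam ^ (card S - 1)) + real (Suc N - card S) * lam ^ card S)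
          * tau D psi (Suc N) rho S)"
  proof (rule sum.cong[OF refl])
    fix S assume S: "S \<in> Pow {..<?m}"
    then have fS: "finite S" using finite_subset by blast
    have "(\<Sum>j<?m. \<Prod>i\<in>S. if i = j then c else lam) = (\<Sum>j<?m. if j \<in> S then c * lam ^ (card S - 1) else lam ^ card S)"
      using fS by (simp add: prod_if_eq)
    also have "\<dots> = real (card S) * (c * lam ^ (card S - 1)) + real (Suc N - card S) * lam ^ card S"
      using S by (intro sum_if_mem) auto
    finally show "(\<Sum>j<?m. \<Prod>i\<in>S. if i = j then c else lam) * tau D psi ?m rho S
      = (real (card S) * (c * lam ^ (card S - 1)) + real (Suc N - card S) * lam ^ card S) * tau D psi (Suc N) rho S" by simp
  qed
  finally show ?thesis .
qed

lemma tens_id_basis: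
  assumes "xs \<in> basis D m" "ys \<in> basis D m"
  shows "tens m (\<lambda>_. id_op) xs ys = (if xs = ys then 1 else 0)"
proof -
  have l: "length xs = m" "length ys = m" using assms by (auto simp: basis_def)
  show ?thesis
  proof (cases "xs = ys")
    case True then show ?thesis by (simp add: tens_def id_op_def)
  next
    case False
    then obtain i where i: "i < m" "xs ! i \<noteq> ys ! i" using l nth_equalityI by metis
    then show ?thesis using False by (auto simp: tens_def id_op_def intro!: prod_zero)
  qed
qed

lemma trace_id: "trace_prod D m (tens m (\<lambda>_. id_op)) rho = (\<Sum>xs\<in>basis D m. rho xs xs)"
  unfolding trace_prod_def
  by (intro sum.cong refl) (simp add: tens_id_basis if_distrib[where f="\<lambda>z. z * _"] cong: if_cong)

lemma id_expand: "Re (\<Sum>xs\<in>basis D m. rho xs xs) = (\<Sum>S\<in>Pow {..<m}. tau D psi m rho S)"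
proof -
  have "tens m (\<lambda>_. id_op) = tens m (\<lambda>i x y. of_real ((\<lambda>_. 1) i) * proj psi x y + of_real ((\<lambda>_. 1) i) * Bop psi x y)"
    by (rule tens_cong) (simp add: Bop_def fun_eq_iff)
  then show ?thesis unfolding trace_id[symmetric]
    by (simp only: Re_expand tau_def) simp
qed

lemma f_expand:
  assumes rho: "perm_inv D (Suc N) rho"
  shows "real (Suc N) * f_rho D psi lam N rho
    = (\<Sum>S\<in>Pow {..<Suc N}. real (Suc N - card S) * lam ^ card S * tau D psi (Suc N) rho S)"
proof -
  have "f_rho D psi lam N rho = Re (trace_prod D (Suc N) (tens (Suc N) (Xop psi lam 0 N)) rho)"
    unfolding f_rho_def by (simp add: tpw_tens tens_X_N)
  then show ?thesis using sym_expand[OF rho, of psi lam 0] by simp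
qed

lemma p_expand:
  assumes rho: "perm_inv D (Suc N) rho"
  shows "real (Suc N) * p_rho D psi lam N rho
    = (\<Sum>S\<in>Pow {..<Suc N}. (real (card S) * lam ^ (card S - 1) + real (Suc N - card S) * lam ^ card S)
          * tau D psi (Suc N) rho S)"
proof -
  have "p_rho D psi lam N rho = Re (trace_prod D (Suc N) (tens (Suc N) (Xop psi lam 1 N)) rho)"
    unfolding p_rho_def by (simp add: tpw_tens tens_Y_N)
  then show ?thesis using sym_expand[OF rho, of psi lam 1] by simp
qed

lemma id_sum3: "x < D \<Longrightarrow> (\<Sum>j<D. f j * id_op j x) = f x"
proof -
  assume x: "x < D"
  have "(\<Sum>j<D. f j * id_op j x) = (\<Sum>j<D. if x = j then f j else 0)"
    by (intro sum.cong refl) (auto simp: id_op_def)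
  also have "\<dots> = f x" using x by simp
  finally show ?thesis .
qed

lemma tr1_diff_left: "tr1 D (\<lambda>x y. A x y - B x y) C = tr1 D A C - tr1 D B C"
  unfolding tr1_def by (simp add: algebra_simps sum_subtractf)

lemma tr1_diff_right: "tr1 D A (\<lambda>x y. B x y - C x y) = tr1 D A B - tr1 D A C"
  unfolding tr1_def by (simp add: algebra_simps sum_subtractf)

context
  fixes D :: nat and psi :: "nat \<Rightarrow> complex"
  assumes D1: "D \<ge> 1" and u: "unit_vec D psi"
begin

lemma tr1_PP: "tr1 D (proj psi) (proj psi) = 1"
proof -
  have "tr1 D (proj psi) (proj psi) = (\<Sum>x<D. psi x * cnj (psi x)) * (\<Sum>y<D. psi y * cnj (psi y))"
    unfolding tr1_def proj_def sum_product by (intro sum.cong refl) (simp add: mult_ac)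
  then show ?thesis using unit_sum[OF u] by simp
qed

lemma tr1_Pid: "tr1 D (proj psi) id_op = 1"
proof -
  have "tr1 D (proj psi) id_op = (\<Sum>x<D. psi x * cnj (psi x))"
    unfolding tr1_def by (intro sum.cong refl) (simp add: id_sum3 proj_def)
  then show ?thesis using unit_sum[OF u] by simp
qed

lemma tr1_idP: "tr1 D id_op (proj psi) = 1"
proof -
  have "tr1 D id_op (proj psi) = (\<Sum>x<D. psi x * cnj (psi x))"
    unfolding tr1_def by (intro sum.cong refl) (simp add: id_sum proj_def)
  then show ?thesis using unit_sum[OF u] by simp
qed

lemma tr1_idid: "tr1 D id_op id_op = of_nat D"
proof -
  have "tr1 D id_op id_op = (\<Sum>x<D. 1)"
    unfolding tr1_def by (intro sum.cong refl) (simp add: id_sum, simp add: id_op_def)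
  then show ?thesis by simp
qed

lemma Bop_fun: "Bop psi = (\<lambda>x y. id_op x y - proj psi x y)"
  by (intro ext) (simp add: Bop_def)

lemma tr1_PB: "tr1 D (proj psi) (Bop psi) = 0"
  unfolding Bop_fun tr1_diff_right tr1_PP tr1_Pid by simp

lemma tr1_BP: "tr1 D (Bop psi) (proj psi) = 0"
  unfolding Bop_fun tr1_diff_left tr1_PP tr1_idP by simp

lemma tr1_BB: "tr1 D (Bop psi) (Bop psi) = of_nat D - 1"
  unfolding Bop_fun tr1_diff_left tr1_diff_right tr1_PP tr1_idP tr1_Pid tr1_idid by simp

lemma trace_TS:
  assumes S: "S \<subseteq> {..<m}" and S': "S' \<subseteq> {..<m}"
  shows "trace_prod D m (tens m (TS psi S)) (tens m (TS psi S')) = (if S = S' then (of_nat D - 1) ^ card S else 0)"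
proof (cases "S = S'")
  case True
  have fS: "finite S" using S finite_subset by blast
  have "trace_prod D m (tens m (TS psi S)) (tens m (TS psi S')) = (\<Prod>i<m. if i \<in> S then of_nat D - 1 else 1)"
    unfolding trace_tens True by (intro prod.cong refl) (simp add: TS_def tr1_BB tr1_PP)
  also have "\<dots> = (\<Prod>i\<in>S. of_nat D - 1)"
    using S by (subst prod.If_cases) (auto simp: Int_absorb1)
  finally show ?thesis using True by simp
next
  case False
  then obtain i where i: "i \<in> S \<and> i \<notin> S' \<or> i \<in> S' \<and> i \<notin> S" by blast
  then have im: "i < m" using S S' by auto
  have "tr1 D (TS psi S i) (TS psi S' i) = 0" using i by (auto simp: TS_def tr1_PB tr1_BP)
  then have "trace_prod D m (tens m (TS psi S)) (tens m (TS psi S')) = 0"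
    unfolding trace_tens using im by (intro prod_zero) auto
  then show ?thesis using False by simp
qed

end

lemma trace_sum_right:
  "trace_prod D m A (\<lambda>xs ys. \<Sum>S\<in>B. c S * T S xs ys) = (\<Sum>S\<in>B. c S * trace_prod D m A (T S))"
  unfolding trace_prod_def
  by (simp add: sum_distrib_right sum_distrib_left mult_ac sum.swap[of _ B])

definition symst :: "nat \<Rightarrow> (nat \<Rightarrow> complex) \<Rightarrow> nat \<Rightarrow> (nat \<Rightarrow> real) \<Rightarrow> op" where
  "symst D psi m g xs ys = (\<Sum>S\<in>Pow {..<m}. of_real (g (card S)) * tens m (TS psi S) xs ys)"

lemma tau_symst:
  assumes D1: "D \<ge> 1" and u: "unit_vec D psi" and S: "S \<subseteq> {..<m}"
  shows "tau D psi m (symst D psi m g) S = g (card S) * (real D - 1) ^ card S"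
proof -
  have "trace_prod D m (tens m (TS psi S)) (symst D psi m g)
      = (\<Sum>S'\<in>Pow {..<m}. of_real (g (card S')) * trace_prod D m (tens m (TS psi S)) (tens m (TS psi S')))"
    unfolding symst_def[abs_def] by (rule trace_sum_right)
  also have "\<dots> = (\<Sum>S'\<in>Pow {..<m}. if S = S' then of_real (g (card S)) * (of_nat D - 1) ^ card S else 0)"
    by (intro sum.cong refl) (simp add: trace_TS[OF D1 u S])
  also have "\<dots> = of_real (g (card S)) * (of_nat D - 1) ^ card S"
    using S by (subst sum.delta') auto
  finally show ?thesis unfolding tau_def using D1 by (simp add: of_nat_diff)
qed

lemma diag_symst:
  assumes D1: "D \<ge> 1" and u: "unit_vec D psi"
  shows "Re (\<Sum>xs\<in>basis D m. symst D psi m g xs xs) = (\<Sum>S\<in>Pow {..<m}. g (card S) * (real D - 1) ^ card S)"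
proof -
  have "Re (\<Sum>xs\<in>basis D m. symst D psi m g xs xs) = (\<Sum>S\<in>Pow {..<m}. tau D psi m (symst D psi m g) S)"
    by (rule id_expand)
  also have "\<dots> = (\<Sum>S\<in>Pow {..<m}. g (card S) * (real D - 1) ^ card S)"
    by (intro sum.cong refl) (simp add: tau_symst[OF D1 u])
  finally show ?thesis .
qed

lemma psd_sum:
  assumes "\<And>S. S \<in> A \<Longrightarrow> psd D m (T S)" "\<And>S. S \<in> A \<Longrightarrow> c S \<ge> 0"
  shows "psd D m (\<lambda>xs ys. \<Sum>S\<in>A. of_real (c S) * T S xs ys)"
  unfolding psd_def Let_def
proof
  fix v :: "nat list \<Rightarrow> complex"
  let ?q = "\<lambda>S. \<Sum>xs\<in>basis D m. \<Sum>ys\<in>basis D m. cnj (v xs) * T S xs ys * v ys"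
  have eq: "(\<Sum>xs\<in>basis D m. \<Sum>ys\<in>basis D m. cnj (v xs) * (\<Sum>S\<in>A. of_real (c S) * T S xs ys) * v ys)
      = (\<Sum>S\<in>A. of_real (c S) * ?q S)"
    by (simp add: sum_distrib_left sum_distrib_right mult_ac sum.swap[of _ A])
  have "Im (?q S) = 0 \<and> Re (?q S) \<ge> 0" if "S \<in> A" for S
    using assms(1)[OF that] unfolding psd_def Let_def by blast
  then show "Im (\<Sum>xs\<in>basis D m. \<Sum>ys\<in>basis D m. cnj (v xs) * (\<Sum>S\<in>A. of_real (c S) * T S xs ys) * v ys) = 0 \<and>
    0 \<le> Re (\<Sum>xs\<in>basis D m. \<Sum>ys\<in>basis D m. cnj (v xs) * (\<Sum>S\<in>A. of_real (c S) * T S xs ys) * v ys)"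
    unfolding eq using assms(2) by (auto simp: Im_sum Re_sum intro!: sum_nonneg)
qed

lemma psd_symst:
  assumes D1: "D \<ge> 1" and u: "unit_vec D psi" and g: "\<And>k. g k \<ge> 0"
  shows "psd D m (symst D psi m g)"
  using psd_sum[of "Pow {..<m}" D m "\<lambda>S. tens m (TS psi S)" "\<lambda>S. g (card S)"] psd_TS[OF D1 u] g
  unfolding symst_def[abs_def] by simp

lemma TS_perm:
  assumes p: "p permutes {..<m}"
  shows "(\<lambda>j. TS psi S (inv p j)) = TS psi (p ` S)"
proof (rule ext)
  fix j
  have "inv p j \<in> S \<longleftrightarrow> j \<in> p ` S"
    by (metis image_iff permutes_inverses(1)[OF p] permutes_inverses(2)[OF p])
  then show "TS psi S (inv p j) = TS psi (p ` S) j" by (simp add: TS_def)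
qed

lemma perm_inv_symst:
  "perm_inv D m (symst D psi m g)"
  unfolding perm_inv_def
proof (intro allI impI ballI)
  fix p xs ys assume p: "p permutes {..<m}" and xs: "xs \<in> basis D m" and ys: "ys \<in> basis D m"
  have l: "length xs = m" "length ys = m" using xs ys by (auto simp: basis_def)
  have inj: "inj_on p A" for A using permutes_inj[OF p] by (simp add: inj_on_def inj_def)
  have pm: "\<And>x. x < m \<Longrightarrow> p x < m" using permutes_in_image[OF p] by (metis lessThan_iff)
  have ipm: "\<And>x. x < m \<Longrightarrow> inv p x < m" using permutes_in_image[OF permutes_inv[OF p]] by (metis lessThan_iff)
  have bij: "bij_betw ((`) p) (Pow {..<m}) (Pow {..<m})"
  proof (rule bij_betw_byWitness[where f'="(`) (inv p)"])
    show "\<forall>a\<in>Pow {..<m}. inv p ` p ` a = a" using permutes_inverses(2)[OF p] by (auto simp: image_image)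
    show "\<forall>a\<in>Pow {..<m}. p ` inv p ` a = a" using permutes_inverses(1)[OF p] by (auto simp: image_image)
    show "(`) p ` Pow {..<m} \<subseteq> Pow {..<m}" using pm by auto
    show "(`) (inv p) ` Pow {..<m} \<subseteq> Pow {..<m}" using ipm by auto
  qed
  have "symst D psi m g (perm_list p xs) (perm_list p ys)
      = (\<Sum>S\<in>Pow {..<m}. of_real (g (card S)) * tens m (TS psi (p ` S)) xs ys)"
    unfolding symst_def using l by (simp add: tens_pl[OF p] TS_perm[OF p])
  also have "\<dots> = (\<Sum>S\<in>Pow {..<m}. of_real (g (card (p ` S))) * tens m (TS psi (p ` S)) xs ys)"
    using inj by (simp add: card_image)
  also have "\<dots> = symst D psi m g xs ys"
    unfolding symst_def by (rule sum.reindex_bij_betw[OF bij, where g="\<lambda>S. of_real (g (card S)) * tens m (TS psi S) xs ys"])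
  finally show "symst D psi m g (perm_list p xs) (perm_list p ys) = symst D psi m g xs ys" .
qed



definition fk :: "real \<Rightarrow> nat \<Rightarrow> nat \<Rightarrow> real" where
  "fk lam N k = real (Suc N - k) * lam ^ k"

definition pk :: "real \<Rightarrow> nat \<Rightarrow> nat \<Rightarrow> real" where
  "pk lam N k = real k * lam ^ (k - 1) + real (Suc N - k) * lam ^ k"

definition adm :: "nat \<Rightarrow> nat \<Rightarrow> op \<Rightarrow> bool" where
  "adm D N rho \<longleftrightarrow> density_op D (N+1) rho \<and> perm_inv D (N+1) rho"

lemma density_trace_Re: "density_op D m rho \<Longrightarrow> Re (\<Sum>xs\<in>basis D m. rho xs xs) = 1"
  unfolding density_op_def by simp

lemma f_nonneg:
  assumes D1: "D \<ge> 1" and u: "unit_vec D psi" and lam: "0 \<le> lam" and r: "adm D N rho"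
  shows "f_rho D psi lam N rho \<ge> 0"
proof -
  have pi: "perm_inv D (Suc N) rho" and de: "density_op D (Suc N) rho" using r by (auto simp: adm_def)
  have "real (Suc N) * f_rho D psi lam N rho \<ge> 0"
    unfolding f_expand[OF pi]
  proof (rule sum_nonneg)
    fix S
    show "real (Suc N - card S) * lam ^ card S * tau D psi (Suc N) rho S \<ge> 0"
      using tau_nonneg[OF D1 u de, of S] lam unfolding tau_def by simp
  qed
  then show ?thesis by (simp add: zero_le_mult_iff)
qed

lemma lin3:
  fixes a b t :: "'a \<Rightarrow> real"
  shows "(\<Sum>x\<in>A. (a x - k * b x + c) * t x) = (\<Sum>x\<in>A. a x * t x) - k * (\<Sum>x\<in>A. b x * t x) + c * (\<Sum>x\<in>A. t x)"
proof -
  have "(\<Sum>x\<in>A. (a x - k * b x + c) * t x) = (\<Sum>x\<in>A. a x * t x - k * (b x * t x) + c * t x)"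
    by (intro sum.cong refl) (simp add: algebra_simps)
  also have "\<dots> = (\<Sum>x\<in>A. a x * t x) - k * (\<Sum>x\<in>A. b x * t x) + c * (\<Sum>x\<in>A. t x)"
    by (simp add: sum.distrib sum_subtractf sum_distrib_left)
  finally show ?thesis .
qed

lemma good_suff:
  assumes D1: "D \<ge> 1" and u: "unit_vec D psi" and lam: "0 \<le> lam" and mu: "mu \<ge> 0"
    and w: "\<And>k. k \<le> Suc N \<Longrightarrow> fk lam N k - (F + mu) * pk lam N k + mu * delta * real (Suc N) \<ge> 0"
    and r: "adm D N rho" and pd: "p_rho D psi lam N rho \<ge> delta"
  shows "f_rho D psi lam N rho \<ge> F * p_rho D psi lam N rho"
proof -
  have pi: "perm_inv D (Suc N) rho" and de: "density_op D (Suc N) rho" using r by (auto simp: adm_def)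
  have one: "(\<Sum>S\<in>Pow {..<Suc N}. tau D psi (Suc N) rho S) = 1"
    using id_expand[where D=D and m="Suc N" and rho=rho and psi=psi] density_trace_Re[OF de] by simp
  have "real (Suc N) * f_rho D psi lam N rho - (F + mu) * (real (Suc N) * p_rho D psi lam N rho)
        + mu * delta * real (Suc N) * (\<Sum>S\<in>Pow {..<Suc N}. tau D psi (Suc N) rho S)
      = (\<Sum>S\<in>Pow {..<Suc N}. (fk lam N (card S) - (F + mu) * pk lam N (card S) + mu * delta * real (Suc N))
           * tau D psi (Suc N) rho S)"
    unfolding f_expand[OF pi] p_expand[OF pi] lin3 by (simp add: fk_def pk_def mult_ac)
  also have "\<dots> \<ge> 0"
  proof (rule sum_nonneg, rule mult_nonneg_nonneg)
    fix S assume S: "S \<in> Pow {..<Suc N}"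
    then have "card S \<le> card {..<Suc N}" by (intro card_mono) auto
    then show "fk lam N (card S) - (F + mu) * pk lam N (card S) + mu * delta * real (Suc N) \<ge> 0"
      by (intro w) simp
    show "tau D psi (Suc N) rho S \<ge> 0" unfolding tau_def by (rule tau_nonneg[OF D1 u de])
  qed
  finally have "real (Suc N) * f_rho D psi lam N rho \<ge> (F + mu) * (real (Suc N) * p_rho D psi lam N rho) - mu * delta * real (Suc N)"
    using one by simp
  moreover have "mu * (real (Suc N) * p_rho D psi lam N rho) \<ge> mu * delta * real (Suc N)"
  proof -
    have "mu * delta \<le> mu * p_rho D psi lam N rho" by (rule mult_left_mono[OF pd mu])
    then have "(mu * delta) * real (Suc N) \<le> (mu * p_rho D psi lam N rho) * real (Suc N)"
      by (rule mult_right_mono) simp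
    then show ?thesis by (simp add: mult_ac)
  qed
  ultimately have "real (Suc N) * f_rho D psi lam N rho \<ge> real (Suc N) * (F * p_rho D psi lam N rho)"
    by (simp add: algebra_simps)
  then show ?thesis by simp
qed

lemma psd_diag_real:
  assumes "psd D m rho" "xs \<in> basis D m"
  shows "Im (rho xs xs) = 0"
proof -
  let ?v = "\<lambda>ys. if ys = xs then (1::complex) else 0"
  have "(\<Sum>ys\<in>basis D m. \<Sum>zs\<in>basis D m. cnj (?v ys) * rho ys zs * ?v zs)
      = (\<Sum>ys\<in>basis D m. \<Sum>zs\<in>basis D m. if zs = xs then (if ys = xs then rho ys zs else 0) else 0)"
    by (intro sum.cong refl) simp
  also have "\<dots> = rho xs xs" using assms(2) by simp
  finally have e: "(\<Sum>ys\<in>basis D m. \<Sum>zs\<in>basis D m. cnj (?v ys) * rho ys zs * ?v zs) = rho xs xs" .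
  have "Im (\<Sum>ys\<in>basis D m. \<Sum>zs\<in>basis D m. cnj (?v ys) * rho ys zs * ?v zs) = 0"
    using spec[OF assms(1)[unfolded psd_def Let_def], where x="?v"] by (rule conjunct1)
  then show ?thesis unfolding e .
qed

lemma density_of_psd:
  assumes "psd D m rho" "Re (\<Sum>xs\<in>basis D m. rho xs xs) = 1"
  shows "density_op D m rho"
proof -
  have "Im (\<Sum>xs\<in>basis D m. rho xs xs) = 0"
    using psd_diag_real[OF assms(1)] by (simp add: Im_sum)
  then have s1: "(\<Sum>xs\<in>basis D m. rho xs xs) = 1" using assms(2) by (simp add: complex_eq_iff)
  show ?thesis unfolding density_op_def
  proof (rule conjI)
    show "\<forall>v. let q = \<Sum>xs\<in>basis D m. \<Sum>ys\<in>basis D m. cnj (v xs) * rho xs ys * v ys in Im q = 0 \<and> 0 \<le> Re q"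
      using assms(1) unfolding psd_def .
  qed (rule s1)
qed

lemma sum_card_two:
  fixes phi :: "nat \<Rightarrow> real"
  assumes "\<And>j. j \<noteq> k \<Longrightarrow> j \<noteq> Suc k \<Longrightarrow> phi j = 0" and fin: "finite A"
  shows "(\<Sum>S\<in>Pow A. phi (card S)) = real (card {S\<in>Pow A. card S = k}) * phi k
     + real (card {S\<in>Pow A. card S = Suc k}) * phi (Suc k)"
proof -
  have "(\<Sum>S\<in>Pow A. phi (card S)) = (\<Sum>S\<in>Pow A. (if card S = k then phi k else 0) + (if card S = Suc k then phi (Suc k) else 0))"
    using assms by (intro sum.cong refl) auto
  also have "\<dots> = (\<Sum>S\<in>{S\<in>Pow A. card S = k}. phi k) + (\<Sum>S\<in>{S\<in>Pow A. card S = Suc k}. phi (Suc k))"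
  proof -
    have fP: "finite (Pow A)" using fin by simp
    show ?thesis unfolding sum.distrib sum.inter_filter[OF fP, symmetric] ..
  qed
  finally show ?thesis by simp
qed

lemma card_subsets_pos:
  assumes "j \<le> m"
  shows "card {S\<in>Pow {..<m}. card S = j} > 0"
proof -
  have ne: "{..<j} \<in> {S\<in>Pow {..<m}. card S = j}" using assms by auto
  have fin: "finite {S\<in>Pow {..<m}. card S = j}" by (rule finite_subset[of _ "Pow {..<m}"]) auto
  show ?thesis using ne fin card_gt_0_iff by blast
qed

lemma witness:
  assumes D2: "D \<ge> 2" and u: "unit_vec D psi" and k: "k < Suc N" and t: "0 \<le> t" "t \<le> 1"
  shows "\<exists>rho. adm D N rho
     \<and> real (Suc N) * f_rho D psi lam N rho = (1 - t) * fk lam N k + t * fk lam N (Suc k)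
     \<and> real (Suc N) * p_rho D psi lam N rho = (1 - t) * pk lam N k + t * pk lam N (Suc k)"
proof -
  have D1: "D \<ge> 1" using D2 by simp
  define m where "m = Suc N"
  define c where "c j = real (card {S\<in>Pow {..<m}. card S = j}) * (real D - 1) ^ j" for j
  have cpos: "c j > 0" if "j \<le> m" for j
    unfolding c_def using card_subsets_pos[OF that] D2 by simp
  define g where "g j = (if j = k then (1 - t) / c k else if j = Suc k then t / c (Suc k) else 0)" for j
  have ck: "c k > 0" "c (Suc k) > 0" using cpos k m_def by auto
  have g0: "g j \<ge> 0" for j unfolding g_def using t ck by auto
  define rho where "rho = symst D psi m g"
  have key: "(\<Sum>S\<in>Pow {..<m}. h (card S) * (g (card S) * (real D - 1) ^ card S)) = (1 - t) * h k + t * h (Suc k)" for h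
  proof -
    have "(\<Sum>S\<in>Pow {..<m}. h (card S) * (g (card S) * (real D - 1) ^ card S))
        = real (card {S\<in>Pow {..<m}. card S = k}) * (h k * (g k * (real D - 1) ^ k))
          + real (card {S\<in>Pow {..<m}. card S = Suc k}) * (h (Suc k) * (g (Suc k) * (real D - 1) ^ Suc k))"
      by (rule sum_card_two[where phi="\<lambda>j. h j * (g j * (real D - 1) ^ j)"]) (auto simp: g_def)
    also have "\<dots> = h k * (g k * c k) + h (Suc k) * (g (Suc k) * c (Suc k))"
      unfolding c_def by (simp add: algebra_simps)
    also have "\<dots> = (1 - t) * h k + t * h (Suc k)"
      using cpos[of k] cpos[of "Suc k"] k unfolding g_def m_def by simp
    finally show ?thesis .
  qed
  have pi: "perm_inv D m rho" unfolding rho_def by (rule perm_inv_symst)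
  have de: "density_op D m rho"
  proof (rule density_of_psd)
    show "psd D m rho" unfolding rho_def by (rule psd_symst[OF D1 u g0])
    show "Re (\<Sum>xs\<in>basis D m. rho xs xs) = 1"
      unfolding rho_def diag_symst[OF D1 u] using key[of "\<lambda>_. 1"] by simp
  qed
  have tau: "tau D psi m rho S = g (card S) * (real D - 1) ^ card S" if "S \<in> Pow {..<m}" for S
    unfolding rho_def using that by (intro tau_symst[OF D1 u]) auto
  have pi': "perm_inv D (Suc N) rho" using pi m_def by simp
  have tau': "tau D psi (Suc N) rho S = g (card S) * (real D - 1) ^ card S" if "S \<in> Pow {..<Suc N}" for S
    using tau that m_def by simp
  have key': "(\<Sum>S\<in>Pow {..<Suc N}. h (card S) * (g (card S) * (real D - 1) ^ card S)) = (1 - t) * h k + t * h (Suc k)" for h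
    using key m_def by simp
  have "real (Suc N) * f_rho D psi lam N rho = (\<Sum>S\<in>Pow {..<Suc N}. real (Suc N - card S) * lam ^ card S * tau D psi (Suc N) rho S)"
    by (rule f_expand[OF pi'])
  also have "\<dots> = (\<Sum>S\<in>Pow {..<Suc N}. fk lam N (card S) * (g (card S) * (real D - 1) ^ card S))"
    by (intro sum.cong refl) (simp add: tau' fk_def)
  also have "\<dots> = (1 - t) * fk lam N k + t * fk lam N (Suc k)" by (rule key')
  finally have F1: "real (Suc N) * f_rho D psi lam N rho = (1 - t) * fk lam N k + t * fk lam N (Suc k)" .
  have "real (Suc N) * p_rho D psi lam N rho = (\<Sum>S\<in>Pow {..<Suc N}. (real (card S) * lam ^ (card S - 1) + real (Suc N - card S) * lam ^ card S)
          * tau D psi (Suc N) rho S)"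
    by (rule p_expand[OF pi'])
  also have "\<dots> = (\<Sum>S\<in>Pow {..<Suc N}. pk lam N (card S) * (g (card S) * (real D - 1) ^ card S))"
    by (intro sum.cong refl) (simp add: tau' pk_def)
  also have "\<dots> = (1 - t) * pk lam N k + t * pk lam N (Suc k)" by (rule key')
  finally have F2: "real (Suc N) * p_rho D psi lam N rho = (1 - t) * pk lam N k + t * pk lam N (Suc k)" .
  show ?thesis using F1 F2 pi de unfolding adm_def m_def by auto
qed



lemma pow_lower1:
  fixes lam :: real assumes "0 < lam" "lam < 1"
  shows "lam ^ (Suc j) \<ge> lam - (1 - lam) * real j"
proof (induction j)
  case 0 then show ?case by simp
next
  case (Suc j)
  have "lam ^ Suc j \<le> 1" using assms by (intro power_le_one) auto
  then have h: "0 \<le> (1 - lam) * (1 - lam ^ Suc j)" using assms by (intro mult_nonneg_nonneg) auto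
  have "(1 - lam) * (1 - lam ^ Suc j) = 1 - lam - lam ^ Suc j + lam * lam ^ Suc j"
    by (simp add: algebra_simps)
  then have "lam * lam ^ Suc j \<ge> lam ^ Suc j - (1 - lam)" using h by linarith
  then have A: "lam ^ Suc (Suc j) \<ge> lam ^ Suc j - (1 - lam)" by (simp only: power_Suc[of lam "Suc j"])
  have e: "(1 - lam) * real (Suc j) = (1 - lam) + (1 - lam) * real j" by (simp add: algebra_simps)
  show ?case using Suc.IH A e by linarith
qed

lemma pow_lower2:
  fixes lam :: real assumes "0 < lam" "lam < 1"
  shows "lam ^ j * (1 + (1 - lam) * real j) \<le> 1"
proof (induction j)
  case 0 then show ?case by simp
next
  case (Suc j)
  have e: "lam ^ Suc j * (1 + (1 - lam) * real (Suc j)) = lam * (lam ^ j * (1 + (1 - lam) * real j)) + (1 - lam) * lam ^ Suc j"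
    by (simp add: algebra_simps)
  have "lam * (lam ^ j * (1 + (1 - lam) * real j)) \<le> lam" using Suc assms by (simp add: mult_left_le)
  moreover have "(1 - lam) * lam ^ Suc j \<le> 1 - lam"
  proof -
    have "lam ^ Suc j \<le> 1" using assms by (intro power_le_one) auto
    then show ?thesis using assms by (intro mult_left_le) auto
  qed
  ultimately show ?case unfolding e by simp
qed

lemma exp_secant:
  fixes lam :: real assumes l: "0 < lam" "lam < 1"
  shows "lam ^ Suc k0 \<ge> lam ^ k * (lam + (1 - lam) * (real k - real k0))"
proof (cases "k \<le> k0")
  case True
  then obtain j where j: "k0 = k + j" using le_Suc_ex by blast
  have "lam ^ Suc k0 = lam ^ k * lam ^ Suc j" by (simp add: j power_add)
  also have "\<dots> \<ge> lam ^ k * (lam - (1 - lam) * real j)"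
    using pow_lower1[OF l, of j] l by (intro mult_left_mono) auto
  finally show ?thesis by (simp add: j)
next
  case False
  then obtain j where j: "k = Suc k0 + j" by (metis add_Suc not_less_eq_eq le_Suc_ex le_add1 le_antisym plus_1_eq_Suc Suc_le_eq not_le)
  have "lam ^ k * (lam + (1 - lam) * (real k - real k0)) = lam ^ Suc k0 * (lam ^ j * (1 + (1 - lam) * real j))"
    by (simp add: j power_add algebra_simps)
  also have "\<dots> \<le> lam ^ Suc k0 * 1"
    using pow_lower2[OF l, of j] l by (intro mult_left_mono) auto
  finally show ?thesis by simp
qed

lemma arith_good:
  fixes lam eps delta a mu :: real and q N k :: nat
  assumes l: "0 < lam" "lam < 1" and a: "0 \<le> a" and d: "delta \<ge> a * lam ^ q" and mu: "mu \<ge> 0"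
    and L0: "lam * eps - mu * (lam * (1 - a) + a * (1 - lam) * real q) \<ge> 0"
    and Lm: "mu * (a * lam + a * (1 - lam) * (real (Suc N) - real q) - 1) - (1 - eps) \<ge> 0"
    and k: "k \<le> Suc N"
  shows "fk lam N k - ((1 - eps) + mu) * pk lam N k + mu * delta * real (Suc N) \<ge> 0"
proof -
  define m where "m = real (Suc N)"
  define kk where "kk = real k"
  have kkm: "kk \<le> m" "kk \<ge> 0" using k unfolding kk_def m_def by simp_all
  have sub: "real (Suc N - k) = m - kk" using k unfolding kk_def m_def by (simp add: of_nat_diff)
  have lp: "lam * (real k * lam ^ (k - 1)) = kk * lam ^ k" unfolding kk_def by (cases k) auto
  define lin where "lin = (m - kk) * lam * (eps - mu) - ((1 - eps) + mu) * kk + mu * m * a * (lam + (1 - lam) * (kk - real q))"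
  have linq: "lin = (m - kk) * (lam * eps - mu * (lam * (1 - a) + a * (1 - lam) * real q))
       + kk * (mu * (a * lam + a * (1 - lam) * (m - real q) - 1) - (1 - eps))"
    unfolding lin_def by (simp add: algebra_simps)
  have lin0: "lin \<ge> 0" unfolding linq using L0 Lm kkm unfolding m_def
    by (intro add_nonneg_nonneg mult_nonneg_nonneg) auto
  have "mu * delta * m * lam \<ge> mu * m * a * (lam * lam ^ q)"
  proof -
    have "delta * lam \<ge> a * (lam * lam ^ q)" using d l by (simp add: mult_right_mono mult_ac)
    moreover have "mu * m \<ge> 0" using mu unfolding m_def by simp
    ultimately have "(mu * m) * (a * (lam * lam ^ q)) \<le> (mu * m) * (delta * lam)"
      by (intro mult_left_mono)
    then show ?thesis by (simp add: mult_ac)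
  qed
  moreover have "mu * m * a * (lam * lam ^ q) \<ge> mu * m * a * (lam ^ k * (lam + (1 - lam) * (kk - real q)))"
  proof -
    have "lam ^ Suc q \<ge> lam ^ k * (lam + (1 - lam) * (real k - real q))" by (rule exp_secant[OF l])
    then show ?thesis using mu a unfolding kk_def m_def by (intro mult_left_mono) auto
  qed
  ultimately have ge: "mu * delta * m * lam \<ge> mu * m * a * (lam ^ k * (lam + (1 - lam) * (kk - real q)))" by simp
  have "lam * (fk lam N k - ((1 - eps) + mu) * pk lam N k + mu * delta * real (Suc N))
      = lam ^ k * ((m - kk) * lam * (eps - mu) - ((1 - eps) + mu) * kk) + mu * delta * m * lam"
    unfolding fk_def pk_def sub m_def[symmetric] using lp by (simp add: algebra_simps)
  also have "\<dots> \<ge> lam ^ k * lin"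
    using ge unfolding lin_def by (simp add: algebra_simps)
  finally have W: "lam * (fk lam N k - ((1 - eps) + mu) * pk lam N k + mu * delta * real (Suc N)) \<ge> lam ^ k * lin" .
  have "lam ^ k * lin \<ge> 0" using lin0 l by simp
  then have "lam * (fk lam N k - ((1 - eps) + mu) * pk lam N k + mu * delta * real (Suc N)) \<ge> 0" using W by linarith
  then show ?thesis using l by (simp add: zero_le_mult_iff)
qed

lemma young_part:
  fixes lam s :: real
  assumes l: "0 < lam" "lam < 1" and s: "0 \<le> s" "s \<le> 1"
  shows "(1 - lam) * s * lam powr s \<ge> lam * (1 - lam powr s)"
proof -
  define A where "A = lam powr s"
  have A0: "A > 0" unfolding A_def using l by simp
  have "(1 / lam) powr s * 1 powr (1 - s) \<le> s * (1 / lam) + (1 - s) * 1"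
    using l s by (intro Youngs_inequality_0) auto
  then have "1 / A \<le> s / lam + (1 - s)" unfolding A_def using l by (simp add: powr_divide)
  then have "lam * A * (1 / A) \<le> lam * A * (s / lam + (1 - s))"
    using A0 l by (intro mult_left_mono) auto
  moreover have "lam * A * (1 / A) = lam" using A0 by simp
  moreover have "lam * A * (s / lam + (1 - s)) = s * A + lam * A * (1 - s)" using l by (simp add: field_simps)
  ultimately have "lam \<le> s * A + lam * A * (1 - s)" by simp
  then show ?thesis unfolding A_def[symmetric] by (simp add: algebra_simps)
qed

lemma powr_anti:
  fixes lam x y :: real
  assumes "0 < lam" "lam < 1" "x \<le> y"
  shows "lam powr y \<le> lam powr x"
proof -
  have "ln lam < 0" using assms by simp
  then have "y * ln lam \<le> x * ln lam" using assms(3) by (simp add: mult_right_mono_neg)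
  then show ?thesis using assms by (simp add: powr_def)
qed

lemma arith_fail1:
  fixes lam eps delta :: real
  assumes l: "0 < lam" "lam < 1" and e: "eps < 1" and N: "N \<le> k0" and d: "delta \<le> lam ^ k0"
  shows "pk lam N (Suc N) \<ge> delta * real (Suc N) \<and> fk lam N (Suc N) < (1 - eps) * pk lam N (Suc N)"
proof -
  have "lam ^ k0 \<le> lam ^ N" using l N by (intro power_decreasing) auto
  then have "delta \<le> lam ^ N" using d by simp
  moreover have "pk lam N (Suc N) = real (Suc N) * lam ^ N" by (simp add: pk_def)
  moreover have "fk lam N (Suc N) = 0" by (simp add: fk_def)
  moreover have "(1 - eps) * (real (Suc N) * lam ^ N) > 0" using l e by simp
  ultimately show ?thesis by (simp add: mult.commute mult_right_mono)
qed

lemma arith_fail2: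
  fixes lam eps delta :: real
  assumes l: "0 < lam" "lam < 1" and e: "0 < eps" "eps < 1" and k0: "k0 \<ge> 1" and N: "k0 < N"
    and c: "eps * lam * (real N - real k0) < (1 - eps) * real k0" and d: "delta \<le> lam ^ k0"
  shows "\<exists>t. 0 \<le> t \<and> t \<le> 1 \<and> (1 - t) * pk lam N k0 + t * pk lam N (Suc k0) \<ge> delta * real (Suc N)
      \<and> (1 - t) * fk lam N k0 + t * fk lam N (Suc k0) < (1 - eps) * ((1 - t) * pk lam N k0 + t * pk lam N (Suc k0))"
proof -
  obtain j where j: "k0 = Suc j" using k0 by (cases k0) auto
  define x where "x = lam ^ j"
  have x0: "x > 0" unfolding x_def using l by simp
  define n where "n = real N - real k0"
  have n0: "n > 0" unfolding n_def using N by simp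
  define s where "s = real k0 + lam * n"
  have s0: "s > 0" unfolding s_def using l n0 k0 by (simp add: add_pos_nonneg)
  define t where "t = real k0 / s"
  have t01: "0 \<le> t" "t \<le> 1" unfolding t_def s_def using l n0 s0 s_def by (auto simp: field_simps)
  have subs: "real (Suc N - k0) = n + 1" "real (Suc N - Suc k0) = n" unfolding n_def using N by (auto simp: of_nat_diff)
  have pk0: "pk lam N k0 = real k0 * x + (n + 1) * lam * x" unfolding pk_def subs by (simp add: x_def j)
  have pk1: "pk lam N (Suc k0) = (real k0 + 1) * lam * x + n * lam * lam * x" unfolding pk_def subs by (simp add: x_def j)
  have fk0: "fk lam N k0 = (n + 1) * lam * x" unfolding fk_def subs by (simp add: x_def j)
  have fk1: "fk lam N (Suc k0) = n * lam * lam * x" unfolding fk_def subs by (simp add: x_def j)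
  have m: "real (Suc N) = n + real k0 + 1" unfolding n_def using N by simp
  have mN: "real N = n + real k0" unfolding n_def by simp
  have st: "s * t = real k0" "s * (1 - t) = lam * n" using s0 by (simp_all add: t_def s_def field_simps)
  have "s * ((1 - t) * pk lam N k0 + t * pk lam N (Suc k0)) = (s * (1 - t)) * pk lam N k0 + (s * t) * pk lam N (Suc k0)"
    by (simp add: algebra_simps)
  also have "\<dots> = s * (lam * x * real (Suc N))" unfolding st by (simp add: pk0 pk1 mN s_def algebra_simps)
  finally have P: "(1 - t) * pk lam N k0 + t * pk lam N (Suc k0) = lam * x * real (Suc N)" using s0 by simp
  have "s * ((1 - t) * fk lam N k0 + t * fk lam N (Suc k0)) = (s * (1 - t)) * fk lam N k0 + (s * t) * fk lam N (Suc k0)"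
    by (simp add: algebra_simps)
  also have "\<dots> = (lam * x * real (Suc N)) * (lam * n)" unfolding st by (simp add: fk0 fk1 mN algebra_simps)
  finally have Fq: "s * ((1 - t) * fk lam N k0 + t * fk lam N (Suc k0)) = (lam * x * real (Suc N)) * (lam * n)" .
  have lx: "lam * x = lam ^ k0" unfolding x_def j by simp
  have c': "eps * lam * n < (1 - eps) * real k0" using c unfolding n_def .
  have "lam * n < (1 - eps) * s" unfolding s_def using c' by (simp add: algebra_simps)
  then have "(lam * x * real (Suc N)) * (lam * n) < (lam * x * real (Suc N)) * ((1 - eps) * s)"
    using l x0 by (intro mult_strict_left_mono) auto
  then have "s * ((1 - t) * fk lam N k0 + t * fk lam N (Suc k0)) < s * ((1 - eps) * ((1 - t) * pk lam N k0 + t * pk lam N (Suc k0)))"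
    unfolding Fq P by (simp add: mult_ac)
  then have lt: "(1 - t) * fk lam N k0 + t * fk lam N (Suc k0) < (1 - eps) * ((1 - t) * pk lam N k0 + t * pk lam N (Suc k0))"
    using s0 by simp
  have ge: "(1 - t) * pk lam N k0 + t * pk lam N (Suc k0) \<ge> delta * real (Suc N)"
    unfolding P lx using d by (simp add: mult_right_mono)
  show ?thesis using t01 lt ge by blast
qed



lemma Fid_good:
  assumes D2: "D \<ge> 2" and u: "unit_vec D psi" and l: "0 < lam" and d: "0 < delta" "delta \<le> 1"
    and mu: "mu \<ge> 0"
    and w: "\<And>k. k \<le> Suc N \<Longrightarrow> fk lam N k - (F + mu) * pk lam N k + mu * delta * real (Suc N) \<ge> 0"
  shows "Fid D psi N delta lam \<ge> F"
proof -
  have D1: "D \<ge> 1" using D2 by simp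
  let ?X = "{f_rho D psi lam N rho / p_rho D psi lam N rho | rho.
      density_op D (N+1) rho \<and> perm_inv D (N+1) rho \<and> p_rho D psi lam N rho \<ge> delta}"
  obtain rho0 where r0: "adm D N rho0"
     and p0: "real (Suc N) * p_rho D psi lam N rho0 = (1 - 0) * pk lam N 0 + 0 * pk lam N (Suc 0)"
    using witness[OF D2 u, of 0 N 0 lam] by auto
  have p1: "p_rho D psi lam N rho0 = 1" using p0 by (simp add: pk_def)
  have "f_rho D psi lam N rho0 / p_rho D psi lam N rho0 \<in> ?X"
    apply (rule CollectI) apply (rule exI[of _ rho0]) using r0 d p1 unfolding adm_def by auto
  then have ne: "?X \<noteq> {}" by blast
  have "F \<le> x" if "x \<in> ?X" for x
  proof -
    obtain rho where r: "density_op D (N+1) rho" "perm_inv D (N+1) rho" "p_rho D psi lam N rho \<ge> delta"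
      and x: "x = f_rho D psi lam N rho / p_rho D psi lam N rho" using \<open>x \<in> ?X\<close> by blast
    have "f_rho D psi lam N rho \<ge> F * p_rho D psi lam N rho"
      using good_suff[OF D1 u _ mu w] l r unfolding adm_def by auto
    moreover have "p_rho D psi lam N rho > 0" using r d by linarith
    ultimately show ?thesis unfolding x by (simp add: le_divide_eq)
  qed
  then show ?thesis unfolding Fid_def by (intro cInf_greatest[OF ne]) auto
qed

lemma Fid_bad:
  assumes D2: "D \<ge> 2" and u: "unit_vec D psi" and l: "0 < lam" and d: "0 < delta"
    and k: "k < Suc N" and t: "0 \<le> t" "t \<le> 1"
    and pge: "(1 - t) * pk lam N k + t * pk lam N (Suc k) \<ge> delta * real (Suc N)"
    and flt: "(1 - t) * fk lam N k + t * fk lam N (Suc k) < F * ((1 - t) * pk lam N k + t * pk lam N (Suc k))"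
  shows "\<not> Fid D psi N delta lam \<ge> F"
proof -
  have D1: "D \<ge> 1" using D2 by simp
  let ?X = "{f_rho D psi lam N rho / p_rho D psi lam N rho | rho.
      density_op D (N+1) rho \<and> perm_inv D (N+1) rho \<and> p_rho D psi lam N rho \<ge> delta}"
  obtain rho where r: "adm D N rho"
     and f: "real (Suc N) * f_rho D psi lam N rho = (1 - t) * fk lam N k + t * fk lam N (Suc k)"
     and p: "real (Suc N) * p_rho D psi lam N rho = (1 - t) * pk lam N k + t * pk lam N (Suc k)"
    using witness[OF D2 u k t] by blast
  have "real (Suc N) * delta \<le> real (Suc N) * p_rho D psi lam N rho" using pge p by (simp add: mult.commute)
  then have pd: "p_rho D psi lam N rho \<ge> delta" by (simp only: mult_le_cancel_left_pos of_nat_0_less_iff zero_less_Suc)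
  have pp: "p_rho D psi lam N rho > 0" using pd d by linarith
  have "real (Suc N) * f_rho D psi lam N rho < real (Suc N) * (F * p_rho D psi lam N rho)"
    using flt f p by (simp add: mult_ac)
  then have "f_rho D psi lam N rho < F * p_rho D psi lam N rho" by simp
  then have lt: "f_rho D psi lam N rho / p_rho D psi lam N rho < F" using pp by (simp add: divide_less_eq)
  have mem: "f_rho D psi lam N rho / p_rho D psi lam N rho \<in> ?X"
    apply (rule CollectI) apply (rule exI[of _ rho]) using r pd unfolding adm_def by auto
  have bdd: "bdd_below ?X"
  proof (rule bdd_belowI)
    fix x assume "x \<in> ?X"
    then obtain rho where r: "density_op D (N+1) rho" "perm_inv D (N+1) rho" "p_rho D psi lam N rho \<ge> delta"
      and x: "x = f_rho D psi lam N rho / p_rho D psi lam N rho" by blast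
    have "f_rho D psi lam N rho \<ge> 0" using f_nonneg[OF D1 u] l r unfolding adm_def by auto
    moreover have "p_rho D psi lam N rho > 0" using r d by linarith
    ultimately show "0 \<le> x" unfolding x by simp
  qed
  have "Fid D psi N delta lam \<le> f_rho D psi lam N rho / p_rho D psi lam N rho"
    unfolding Fid_def by (rule cInf_lower[OF mem bdd])
  then show ?thesis using lt by linarith
qed

lemma log_facts:
  fixes lam delta :: real
  assumes l: "0 < lam" "lam < 1" and d: "0 < delta" "delta < 1"
  shows "log lam delta > 0" "lam powr (log lam delta) = delta"
proof -
  have "ln lam < 0" "ln delta < 0" using l d by simp_all
  then show "log lam delta > 0" by (simp add: log_def divide_neg_neg)
  show "lam powr (log lam delta) = delta" using l d by simp
qed

lemma pow_vs_delta:
  fixes lam delta :: real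
  assumes l: "0 < lam" "lam < 1" and d: "0 < delta" "delta < 1"
  shows "real k \<le> log lam delta \<Longrightarrow> delta \<le> lam ^ k"
    and "log lam delta \<le> real k \<Longrightarrow> lam ^ k \<le> delta"
proof -
  have e: "lam ^ k = lam powr (real k)" using l by (simp add: powr_realpow)
  have dd: "delta = lam powr (log lam delta)" using log_facts[OF l d] by simp
  show "real k \<le> log lam delta \<Longrightarrow> delta \<le> lam ^ k"
  proof -
    assume h: "real k \<le> log lam delta"
    have "lam powr (log lam delta) \<le> lam powr real k" by (rule powr_anti[OF l h])
    then show ?thesis using dd e by simp
  qed
  show "log lam delta \<le> real k \<Longrightarrow> lam ^ k \<le> delta"
  proof -
    assume h: "log lam delta \<le> real k"
    have "lam powr real k \<le> lam powr (log lam delta)" by (rule powr_anti[OF l h])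
    then show ?thesis using dd e by simp
  qed
qed

lemma good_hi:
  fixes lam eps delta :: real
  assumes D2: "D \<ge> 2" and u: "unit_vec D psi" and l: "0 < lam" "lam < 1" and e: "0 < eps" "eps < 1"
    and d: "0 < delta" "delta < 1" and K: "K \<ge> 1" and dK: "lam ^ K \<le> delta"
    and N: "real N \<ge> real K + real K * (1 - eps) / (lam * eps)"
  shows "Fid D psi N delta lam \<ge> 1 - eps"
proof -
  define mu where "mu = lam * eps / ((1 - lam) * real K)"
  have Kp: "real K > 0" using K by simp
  have mu0: "mu \<ge> 0" unfolding mu_def using l e Kp by simp
  have NK: "(real N - real K) * (lam * eps) \<ge> real K * (1 - eps)"
    using N l e by (simp add: field_simps)
  show ?thesis
  proof (rule Fid_good[OF D2 u l(1) d(1) _ mu0])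
    show "delta \<le> 1" using d by simp
    fix k assume k: "k \<le> Suc N"
    show "fk lam N k - (1 - eps + mu) * pk lam N k + mu * delta * real (Suc N) \<ge> 0"
    proof (rule arith_good[OF l _ _ mu0 _ _ k, where a=1 and q=K])
      show "0 \<le> (1::real)" by simp
      show "1 * lam ^ K \<le> delta" using dK by simp
      show "lam * eps - mu * (lam * (1 - 1) + 1 * (1 - lam) * real K) \<ge> 0"
        unfolding mu_def using l Kp by simp
      have "mu * (1 * lam + 1 * (1 - lam) * (real (Suc N) - real K) - 1) - (1 - eps)
          = (lam * eps * (real N - real K) - real K * (1 - eps)) / real K"
        unfolding mu_def using l Kp by (simp add: field_simps)
      also have "\<dots> \<ge> 0" using NK Kp by (simp add: mult.commute)
      finally show "mu * (1 * lam + 1 * (1 - lam) * (real (Suc N) - real K) - 1) - (1 - eps) \<ge> 0" .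
    qed
  qed
qed

lemma good_h3:
  fixes lam eps delta :: real
  assumes D2: "D \<ge> 2" and u: "unit_vec D psi" and l: "0 < lam" "lam < 1" and e: "0 < eps" "eps < 1"
    and d: "0 < delta" "delta < 1" and q1: "real q \<le> log lam delta" and q2: "log lam delta < real q + 1"
    and N: "real N \<ge> log lam delta / (lam * eps) - (1 - lam) * real q / lam"
  shows "Fid D psi N delta lam \<ge> 1 - eps"
proof -
  define Lg where "Lg = log lam delta"
  define s where "s = Lg - real q"
  have s01: "0 \<le> s" "s \<le> 1" using q1 q2 unfolding s_def Lg_def by auto
  define a where "a = lam powr s"
  have a0: "a > 0" unfolding a_def using l by simp
  have a1: "a \<le> 1" unfolding a_def using powr_anti[OF l s01(1)] l by simp
  have da: "delta = a * lam ^ q"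
  proof -
    have "delta = lam powr Lg" using log_facts[OF l d] unfolding Lg_def by simp
    also have "Lg = s + real q" unfolding s_def by simp
    also have "lam powr (s + real q) = a * lam ^ q" unfolding a_def using l by (simp add: powr_add powr_realpow)
    finally show ?thesis .
  qed
  define D0 where "D0 = lam * (1 - a) + a * (1 - lam) * real q"
  have D0p: "D0 > 0"
  proof (cases "q = 0")
    case True
    then have "a = delta" using da by simp
    then show ?thesis unfolding D0_def using True l d by simp
  next
    case False
    then have "a * (1 - lam) * real q > 0" using a0 l by simp
    moreover have "lam * (1 - a) \<ge> 0" using l a1 by simp
    ultimately show ?thesis unfolding D0_def by linarith
  qed
  define mu where "mu = lam * eps / D0"
  have mu0: "mu \<ge> 0" unfolding mu_def using l e D0p by simp
  have young: "(1 - lam) * s * a \<ge> lam * (1 - a)" unfolding a_def by (rule young_part[OF l s01])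
  define m where "m = real (Suc N)"
  have Nb: "lam * eps * real N \<ge> Lg - eps * (1 - lam) * real q"
  proof -
    have "lam * eps * real N \<ge> lam * eps * (Lg / (lam * eps) - (1 - lam) * real q / lam)"
      using N l e unfolding Lg_def by (intro mult_left_mono) auto
    also have "lam * eps * (Lg / (lam * eps) - (1 - lam) * real q / lam) = Lg - eps * (1 - lam) * real q"
      using l e by (simp add: field_simps)
    finally show ?thesis .
  qed
  have Eq: "lam * eps * (a * lam + a * (1 - lam) * (m - real q) - 1) - (1 - eps) * D0
      = a * (1 - lam) * (lam * eps * m - real q * (1 - eps * (1 - lam))) + lam * (a * (1 - eps * (1 - lam)) - 1)"
    unfolding D0_def by (simp add: algebra_simps)
  have "lam * eps * m - real q * (1 - eps * (1 - lam)) \<ge> s + lam * eps"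
    using Nb unfolding m_def s_def by (simp add: algebra_simps)
  then have "a * (1 - lam) * (lam * eps * m - real q * (1 - eps * (1 - lam))) \<ge> a * (1 - lam) * (s + lam * eps)"
    using a0 l by (intro mult_left_mono) auto
  moreover have "a * (1 - lam) * (s + lam * eps) + lam * (a * (1 - eps * (1 - lam)) - 1)
      = (1 - lam) * s * a - lam * (1 - a)" by (simp add: algebra_simps)
  ultimately have E: "lam * eps * (a * lam + a * (1 - lam) * (m - real q) - 1) - (1 - eps) * D0 \<ge> 0"
    unfolding Eq using young by linarith
  show ?thesis
  proof (rule Fid_good[OF D2 u l(1) d(1) _ mu0])
    show "delta \<le> 1" using d by simp
    fix k assume k: "k \<le> Suc N"
    show "fk lam N k - (1 - eps + mu) * pk lam N k + mu * delta * real (Suc N) \<ge> 0"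
    proof (rule arith_good[OF l _ _ mu0 _ _ k, where a=a and q=q])
      show "0 \<le> a" using a0 by simp
      show "a * lam ^ q \<le> delta" using da by simp
      have "lam * eps - mu * (lam * (1 - a) + a * (1 - lam) * real q) = 0"
        unfolding mu_def D0_def[symmetric] using D0p by simp
      then show "lam * eps - mu * (lam * (1 - a) + a * (1 - lam) * real q) \<ge> 0" by simp
      have "mu * (a * lam + a * (1 - lam) * (real (Suc N) - real q) - 1) - (1 - eps)
          = (lam * eps * (a * lam + a * (1 - lam) * (m - real q) - 1) - (1 - eps) * D0) / D0"
        unfolding mu_def m_def using D0p by (simp add: field_simps)
      also have "\<dots> \<ge> 0" using E D0p by simp
      finally show "mu * (a * lam + a * (1 - lam) * (real (Suc N) - real q) - 1) - (1 - eps) \<ge> 0" .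
    qed
  qed
qed

lemma bad_lo:
  fixes lam eps delta :: real
  assumes D2: "D \<ge> 2" and u: "unit_vec D psi" and l: "0 < lam" "lam < 1" and e: "0 < eps" "eps < 1"
    and d: "0 < delta" "delta < 1" and q: "q \<ge> 1" and dq: "delta \<le> lam ^ q"
    and N: "int N < int q + \<lceil>real q * (1 - eps) / (lam * eps)\<rceil>"
  shows "\<not> Fid D psi N delta lam \<ge> 1 - eps"
proof (cases "N \<le> q")
  case True
  have h: "pk lam N (Suc N) \<ge> delta * real (Suc N) \<and> fk lam N (Suc N) < (1 - eps) * pk lam N (Suc N)"
    by (rule arith_fail1[OF l e(2) True dq])
  show ?thesis
    by (rule Fid_bad[OF D2 u l(1) d(1) lessI, where t=1]) (use h in simp_all)
next
  case False
  then have qN: "q < N" by simp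
  have "int N - int q < \<lceil>real q * (1 - eps) / (lam * eps)\<rceil>" using N by simp
  then have "real N - real q < real q * (1 - eps) / (lam * eps)" by (simp add: less_ceiling_iff)
  then have "(real N - real q) * (lam * eps) < real q * (1 - eps)" using l e by (simp add: field_simps)
  then have c: "eps * lam * (real N - real q) < (1 - eps) * real q" by (simp add: mult_ac)
  obtain t where t: "0 \<le> t" "t \<le> 1"
    and pge: "(1 - t) * pk lam N q + t * pk lam N (Suc q) \<ge> delta * real (Suc N)"
    and flt: "(1 - t) * fk lam N q + t * fk lam N (Suc q) < (1 - eps) * ((1 - t) * pk lam N q + t * pk lam N (Suc q))"
    using arith_fail2[OF l e q qN c dq] by blast
  have qs: "q < Suc N" using qN by simp
  show ?thesis by (rule Fid_bad[OF D2 u l(1) d(1) qs t pge flt])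
qed

theorem theorem3:
  fixes D :: nat and psi :: "nat \<Rightarrow> complex" and eps delta lam :: real
  assumes "D \<ge> 2" and "unit_vec D psi"
    and "0 < eps" "eps < 1" "0 < delta" "delta < 1" "0 < lam" "lam < 1"
  defines "F \<equiv> 1 - eps" and "\<nu> \<equiv> 1 - lam"
    and "kp \<equiv> \<lceil>log lam delta\<rceil>" and "km \<equiv> \<lfloor>log lam delta\<rfloor>"
    and "N \<equiv> Nmin D psi eps delta lam"
  shows "km + \<lceil>of_int km * F / (lam * eps)\<rceil> \<le> int N
       \<and> int N \<le> kp + \<lceil>of_int kp * F / (lam * eps)\<rceil>
       \<and> int N \<le> \<lceil>log lam delta / (lam * eps) - \<nu> * of_int km / lam\<rceil>
       \<and> \<lceil>log lam delta / (lam * eps) - \<nu> * of_int km / lam\<rceil>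
           = \<lceil>ln delta / (lam * eps * ln lam) - \<nu> * of_int km / lam\<rceil>
       \<and> (log lam delta \<in> \<int> \<longrightarrow>
            int N = km + \<lceil>of_int km * F / (lam * eps)\<rceil>
          \<and> int N = kp + \<lceil>of_int kp * F / (lam * eps)\<rceil>
          \<and> int N = \<lceil>log lam delta / (lam * eps) - \<nu> * of_int km / lam\<rceil>)"
proof -
  have D2: "D \<ge> 2" and u: "unit_vec D psi" and e: "0 < eps" "eps < 1" and d: "0 < delta" "delta < 1"
    and l: "0 < lam" "lam < 1" using assms by auto
  define Lg where "Lg = log lam delta"
  have Lpos: "Lg > 0" unfolding Lg_def by (rule log_facts(1)[OF l d])
  have kpLg: "Lg \<le> of_int kp" unfolding kp_def Lg_def by simp
  have kmLg: "of_int km \<le> Lg" "Lg < of_int km + 1" unfolding km_def Lg_def by (simp_all add: floor_correct)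
  have kp1: "kp \<ge> 1" unfolding kp_def using Lpos unfolding Lg_def by (simp add: le_ceiling_iff)
  have km0: "km \<ge> 0" unfolding km_def using Lpos unfolding Lg_def by simp
  define K where "K = nat kp"
  have K: "real K = of_int kp" "K \<ge> 1" unfolding K_def using kp1 by simp_all
  define q where "q = nat km"
  have q: "real q = of_int km" "int q = km" unfolding q_def using km0 by simp_all
  have dK: "lam ^ K \<le> delta" using pow_vs_delta(2)[OF l d, of K] kpLg K unfolding Lg_def by simp
  have dq: "delta \<le> lam ^ q" using pow_vs_delta(1)[OF l d, of q] kmLg q unfolding Lg_def by simp
  have Fp: "F > 0" "F = 1 - eps" unfolding F_def using e by simp_all
  define hi where "hi = kp + \<lceil>of_int kp * F / (lam * eps)\<rceil>"
  have hi1: "hi \<ge> 1"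
  proof -
    have "of_int kp * F / (lam * eps) \<ge> 0" using kp1 Fp l e by simp
    then have c0: "\<lceil>of_int kp * F / (lam * eps)\<rceil> \<ge> 0" by (subst le_ceiling_iff) simp
    show ?thesis unfolding hi_def using kp1 c0 by linarith
  qed
  define N1 where "N1 = nat hi"
  have N1r: "real N1 = of_int hi" unfolding N1_def using hi1 by simp
  have G1: "Fid D psi N1 delta lam \<ge> 1 - eps"
  proof (rule good_hi[OF D2 u l e d K(2) dK])
    have "real N1 \<ge> of_int kp + of_int kp * F / (lam * eps)"
      unfolding N1r hi_def by simp
    then show "real N1 \<ge> real K + real K * (1 - eps) / (lam * eps)" using K Fp by simp
  qed
  define x3 where "x3 = log lam delta / (lam * eps) - \<nu> * of_int km / lam"
  have x3p: "x3 > 0"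
  proof -
    have "eps * (1 - lam) * of_int km \<le> eps * (1 - lam) * Lg"
      using kmLg e l by (intro mult_left_mono) auto
    also have "\<dots> < Lg"
    proof -
      have "eps * (1 - lam) < 1 * 1" using e l by (intro mult_strict_mono) auto
      then have "eps * (1 - lam) * Lg < 1 * Lg" using Lpos by (intro mult_strict_right_mono) auto
      then show ?thesis by simp
    qed
    finally have "Lg - eps * (1 - lam) * of_int km > 0" by simp
    moreover have "x3 = (Lg - eps * (1 - lam) * of_int km) / (lam * eps)"
      unfolding x3_def Lg_def \<nu>_def using l e by (simp add: field_simps)
    ultimately show ?thesis using l e by simp
  qed
  define h3 where "h3 = \<lceil>x3\<rceil>"
  have h31: "h3 \<ge> 1" unfolding h3_def using x3p by (simp add: le_ceiling_iff)
  define N3 where "N3 = nat h3"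
  have N3r: "real N3 = of_int h3" unfolding N3_def using h31 by simp
  have G3: "Fid D psi N3 delta lam \<ge> 1 - eps"
  proof (rule good_h3[OF D2 u l e d])
    show "real q \<le> log lam delta" "log lam delta < real q + 1" using kmLg q unfolding Lg_def by simp_all
    have "real N3 \<ge> x3" unfolding N3r h3_def by simp
    then show "real N3 \<ge> log lam delta / (lam * eps) - (1 - lam) * real q / lam"
      unfolding x3_def \<nu>_def q by simp
  qed
  define P where "P n \<longleftrightarrow> n \<ge> 1 \<and> Fid D psi n delta lam \<ge> 1 - eps" for n
  have NL: "N = (LEAST n. P n)" unfolding N_def Nmin_def P_def ..
  have P1: "P N1" unfolding P_def using G1 hi1 N1_def by simp
  have P3: "P N3" unfolding P_def using G3 h31 N3_def by simp
  have PN: "P N" unfolding NL by (rule LeastI[of P N1, OF P1])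
  have NN1: "N \<le> N1" unfolding NL by (rule Least_le[of P N1, OF P1])
  have NN3: "N \<le> N3" unfolding NL by (rule Least_le[of P N3, OF P3])
  define lo where "lo = km + \<lceil>of_int km * F / (lam * eps)\<rceil>"
  have lo: "lo \<le> int N"
  proof (rule ccontr)
    assume "\<not> lo \<le> int N"
    then have Nlo: "int N < lo" by simp
    have q1: "q \<ge> 1"
    proof (rule ccontr)
      assume "\<not> q \<ge> 1"
      then have "km = 0" using q by simp
      then show False using Nlo unfolding lo_def by simp
    qed
    have "int N < int q + \<lceil>real q * (1 - eps) / (lam * eps)\<rceil>"
      using Nlo unfolding lo_def q Fp(2) .
    then have "\<not> Fid D psi N delta lam \<ge> 1 - eps" by (rule bad_lo[OF D2 u l e d q1 dq])
    then show False using PN unfolding P_def by simp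
  qed
  have up1: "int N \<le> kp + \<lceil>of_int kp * F / (lam * eps)\<rceil>"
    using NN1 hi1 unfolding N1_def hi_def by linarith
  have up3: "int N \<le> \<lceil>log lam delta / (lam * eps) - \<nu> * of_int km / lam\<rceil>"
    using NN3 h31 unfolding N3_def h3_def x3_def by linarith
  have logeq: "\<lceil>log lam delta / (lam * eps) - \<nu> * of_int km / lam\<rceil>
           = \<lceil>ln delta / (lam * eps * ln lam) - \<nu> * of_int km / lam\<rceil>"
    by (simp add: log_def mult_ac)
  have intcase: "int N = km + \<lceil>of_int km * F / (lam * eps)\<rceil>
          \<and> int N = kp + \<lceil>of_int kp * F / (lam * eps)\<rceil>
          \<and> int N = \<lceil>log lam delta / (lam * eps) - \<nu> * of_int km / lam\<rceil>"
    if "log lam delta \<in> \<int>"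
  proof -
    from that obtain z where z: "log lam delta = of_int z" by (auto elim: Ints_cases)
    have kk: "km = z" "kp = z" unfolding km_def kp_def z by simp_all
    have "log lam delta / (lam * eps) - \<nu> * of_int km / lam = of_int km * F / (lam * eps) + of_int km"
      unfolding z kk \<nu>_def Fp(2) using l e by (simp add: field_simps)
    then have h: "\<lceil>log lam delta / (lam * eps) - \<nu> * of_int km / lam\<rceil> = km + \<lceil>of_int km * F / (lam * eps)\<rceil>"
      by simp
    show ?thesis using lo up1 up3 h unfolding lo_def kk by linarith
  qed
  show ?thesis using lo up1 up3 logeq intcase unfolding lo_def by blast
qed

end
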